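(* Let $A\in\{0,1\}^{N\times n}$ and write $m_\infty:=\mathsf{m}^{rd}(+\infty,A)$. For every $\epsilon>0$ there exists a constant $C_\epsilon=O(\epsilon^{-4})$, depending only on $\epsilon$, such that $$\mathsf{m}^{rd}\bigl(C_\epsilon\cdot m_\infty^{-2}\cdot\log(\min(n,N)),\,A\bigr)\ \ge\ (1-\epsilon)\,m_\infty .$$
   Context: For $A\in\{0,1\}^{N\times n}$, $m\ge 0$ and $\tau\in\mathbb{R}$, unit vectors $U_1,\dots,U_N\in\mathbb{R}^d$ and $V_1,\dots,V_n\in\mathbb{R}^d$ form a margin-$m$, relative-bias-$\tau$ embedding of $A$ in dimension $d$ if $\langle U_j,V_i\rangle\ge\tau+m$ whenever $A_{ji}=1$ and $\langle U_j,V_i\rangle\le\tau-m$ whenever $A_{ji}=0$. The quantity $\mathsf{m}^{rd}(d,A)$ is the supremum of all $m\ge 0$ for which a margin-$m$, relative-bias-$0$ embedding of $A$ in dimension $d$ exists ($-\infty$ if none exists), and $\mathsf{m}^{rd}(+\infty,A):=\sup_d\mathsf{m}^{rd}(d,A)$. *)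

theory Defs
  imports "HOL-Analysis.Analysis" "HOL-Library.Landau_Symbols"
begin

text \<open>Vectors in R^d are represented as functions nat => real vanishing outside {..<d}.
  A matrix A in {0,1}^(N x n) is a predicate A :: nat => nat => bool on j < N, i < n.\<close>

definition vec_in :: "nat \<Rightarrow> (nat \<Rightarrow> real) \<Rightarrow> bool" where
  "vec_in d u \<longleftrightarrow> (\<forall>k\<ge>d. u k = 0)"

definition dinner :: "nat \<Rightarrow> (nat \<Rightarrow> real) \<Rightarrow> (nat \<Rightarrow> real) \<Rightarrow> real" where
  "dinner d u v = (\<Sum>k<d. u k * v k)"

definition unit_vec :: "nat \<Rightarrow> (nat \<Rightarrow> real) \<Rightarrow> bool" where
  "unit_vec d u \<longleftrightarrow> vec_in d u \<and> dinner d u u = 1"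

definition is_embedding ::
  "nat \<Rightarrow> nat \<Rightarrow> nat \<Rightarrow> (nat \<Rightarrow> nat \<Rightarrow> bool) \<Rightarrow> real \<Rightarrow> real
   \<Rightarrow> (nat \<Rightarrow> nat \<Rightarrow> real) \<Rightarrow> (nat \<Rightarrow> nat \<Rightarrow> real) \<Rightarrow> bool" where
  "is_embedding d N n A m \<tau> U V \<longleftrightarrow>
     (\<forall>j<N. unit_vec d (U j)) \<and> (\<forall>i<n. unit_vec d (V i)) \<and>
     (\<forall>j<N. \<forall>i<n. (A j i \<longrightarrow> dinner d (U j) (V i) \<ge> \<tau> + m) \<and>
                   (\<not> A j i \<longrightarrow> dinner d (U j) (V i) \<le> \<tau> - m))"

text \<open>m^rd(d,A): supremum of admissible margins (Sup of the empty set in ereal is -infinity).\<close>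
definition mrd :: "nat \<Rightarrow> nat \<Rightarrow> nat \<Rightarrow> (nat \<Rightarrow> nat \<Rightarrow> bool) \<Rightarrow> ereal" where
  "mrd d N n A = Sup {ereal m | m. m \<ge> 0 \<and> (\<exists>U V. is_embedding d N n A m 0 U V)}"

definition mrd_inf :: "nat \<Rightarrow> nat \<Rightarrow> (nat \<Rightarrow> nat \<Rightarrow> bool) \<Rightarrow> ereal" where
  "mrd_inf N n A = (SUP d. mrd d N n A)"

end

theory Submission
  imports Defs "HOL-Probability.Hoeffding"
begin

lemma cosh_le_exp_sq: "(exp x + exp (-x)) / 2 \<le> exp (x^2/2)" for x :: real
proof -
  have key: "(exp y + exp (-y)) / 2 \<le> exp (y^2/2)" if "y \<ge> 0" for y :: real
  proof -
    have "- (2*y) * (1/2) + ln (1 + (1/2) * (exp (2*y) - 1)) \<le> (2*y)^2/8"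
      using Hoeffdings_lemma_aux[of "2*y" "1/2"] that by simp
    hence "ln ((1 + exp (2*y))/2) \<le> y + y^2/2"
      by (simp add: power2_eq_square field_simps)
    hence "(1 + exp (2*y))/2 \<le> exp (y + y^2/2)"
      by (smt (verit) exp_gt_zero exp_le_cancel_iff exp_ln)
    hence "exp (-y) * ((1 + exp (2*y))/2) \<le> exp (-y) * exp (y + y^2/2)"
      by (intro mult_left_mono) auto
    moreover have "exp (-y) * ((1 + exp (2*y))/2) = (exp y + exp (-y)) / 2"
      by (simp add: field_simps flip: exp_add)
    moreover have "exp (-y) * exp (y + y^2/2) = exp (y^2/2)"
      by (simp flip: exp_add)
    ultimately show ?thesis by simp
  qed
  show ?thesis
  proof (cases "x \<ge> 0")
    case True then show ?thesis using key by simp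
  next
    case False then show ?thesis using key[of "-x"] by (simp add: add.commute)
  qed
qed

fun Es :: "nat \<Rightarrow> (real list \<Rightarrow> real) \<Rightarrow> real" where
  "Es 0 f = f []"
| "Es (Suc D) f = (Es D (\<lambda>e. f ((-1) # e)) + Es D (\<lambda>e. f (1 # e))) / 2"

lemma Es_mono: "(\<And>e. f e \<le> g e) \<Longrightarrow> Es D f \<le> Es D g"
proof (induction D arbitrary: f g)
  case 0 then show ?case by simp
next
  case (Suc D)
  have "Es D (\<lambda>e. f ((-1) # e)) \<le> Es D (\<lambda>e. g ((-1) # e))" by (rule Suc.IH) (use Suc.prems in auto)
  moreover have "Es D (\<lambda>e. f (1 # e)) \<le> Es D (\<lambda>e. g (1 # e))" by (rule Suc.IH) (use Suc.prems in auto)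
  ultimately show ?case by simp
qed

lemma Es_add: "Es D (\<lambda>e. f e + g e) = Es D f + Es D g"
  by (induction D arbitrary: f g) (simp_all add: field_simps)

lemma Es_cmult: "Es D (\<lambda>e. c * f e) = c * Es D f"
  by (induction D arbitrary: f) (simp_all add: field_simps)

lemma Es_const: "Es D (\<lambda>e. c) = c"
  by (induction D) simp_all

lemma Es_cong: "(\<And>e. length e = D \<Longrightarrow> f e = g e) \<Longrightarrow> Es D f = Es D g"
proof (induction D arbitrary: f g)
  case 0 then show ?case by simp
next
  case (Suc D)
  have "Es D (\<lambda>e. f ((-1) # e)) = Es D (\<lambda>e. g ((-1) # e))" by (rule Suc.IH) (use Suc.prems in auto)
  moreover have "Es D (\<lambda>e. f (1 # e)) = Es D (\<lambda>e. g (1 # e))" by (rule Suc.IH) (use Suc.prems in auto)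
  ultimately show ?case by simp
qed

fun rowdot :: "real list \<Rightarrow> (nat \<Rightarrow> real) \<Rightarrow> real" where
  "rowdot [] y = 0"
| "rowdot (a # r) y = a * y 0 + rowdot r (\<lambda>l. y (Suc l))"

definition rowdotD :: "nat \<Rightarrow> real list \<Rightarrow> (nat \<Rightarrow> real) \<Rightarrow> real" where
  "rowdotD D r y = (\<Sum>l<D. r ! l * y l)"

lemma rowdot_eq: "length r = D \<Longrightarrow> rowdot r y = rowdotD D r y"
proof (induction r arbitrary: D y)
  case Nil then show ?case by (simp add: rowdotD_def)
next
  case (Cons a r)
  then obtain D' where D': "D = Suc D'" "length r = D'" by auto
  have "rowdotD D (a # r) y = a * y 0 + (\<Sum>l<D'. r ! l * y (Suc l))"
    unfolding rowdotD_def D' sum.lessThan_Suc_shift by simp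
  then show ?case using Cons.IH[OF D'(2)] by (simp add: rowdotD_def)
qed

definition nsq :: "nat \<Rightarrow> (nat \<Rightarrow> real) \<Rightarrow> real" where
  "nsq D y = (\<Sum>l<D. (y l)^2)"

lemma nsq_Suc: "nsq (Suc D) y = (y 0)^2 + nsq D (\<lambda>l. y (Suc l))"
  unfolding nsq_def sum.lessThan_Suc_shift by simp

lemma nsq_nonneg: "nsq D y \<ge> 0"
  unfolding nsq_def by (simp add: sum_nonneg)

lemma mgf_step:
  fixes t s a c :: real
  assumes t: "t \<ge> 0" and r: "1 - 2*t*(a^2 + s) > 0" and s: "s \<ge> 0"
  shows "(exp (t*(c + (-1)*a)^2/(1-2*t * s)) / sqrt (1-2*t * s) + exp (t*(c + 1*a)^2/(1-2*t * s)) / sqrt (1-2*t * s)) / 2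
         \<le> exp (t*c^2/(1-2*t*(a^2+s))) / sqrt (1-2*t*(a^2+s))"
proof -
  define r where "r = 1 - 2*t * s"
  have "t*a^2 \<ge> 0" using t by simp
  moreover have "1 - 2*t * s = 1 - 2*t*(a^2 + s) + 2*(t*a^2)" by (simp add: algebra_simps)
  ultimately have rpos: "r > 0" using r unfolding r_def by linarith
  define \<beta> where "\<beta> = t / r"
  define b where "b = \<beta> * a^2"
  have \<beta>0: "\<beta> \<ge> 0" using t rpos by (simp add: \<beta>_def)
  have b0: "b \<ge> 0" using \<beta>0 by (simp add: b_def)
  have r': "1 - 2*t*(a^2+s) = r * (1 - 2*b)"
    using rpos by (simp add: r_def b_def \<beta>_def field_simps)
  have b1: "1 - 2*b > 0" using r r' rpos zero_less_mult_pos by metis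
  have e1: "t*(c + (-1)*a)^2/r = \<beta>*c^2 + b + (-(2*\<beta>*c*a))"
    using rpos by (simp add: \<beta>_def b_def power2_eq_square field_simps)
  have e2: "t*(c + 1*a)^2/r = \<beta>*c^2 + b + (2*\<beta>*c*a)"
    using rpos by (simp add: \<beta>_def b_def power2_eq_square field_simps)
  have "(exp (t*(c + (-1)*a)^2/r) / sqrt r + exp (t*(c + 1*a)^2/r) / sqrt r) / 2
       = exp (\<beta>*c^2 + b) * ((exp (2*\<beta>*c*a) + exp (-(2*\<beta>*c*a)))/2) / sqrt r"
    unfolding e1 e2 exp_add[of "\<beta>*c^2 + b"] using rpos by (simp add: field_simps)
  also have "\<dots> \<le> exp (\<beta>*c^2 + b) * exp ((2*\<beta>*c*a)^2/2) / sqrt r"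
    using rpos by (intro divide_right_mono mult_left_mono cosh_le_exp_sq) auto
  also have "exp (\<beta>*c^2 + b) * exp ((2*\<beta>*c*a)^2/2) = exp b * exp (\<beta>*c^2*(1+2*b))"
    by (simp add: b_def power2_eq_square field_simps flip: exp_add)
  also have "exp b * exp (\<beta>*c^2*(1+2*b)) / sqrt r \<le> (1 / sqrt (1 - 2*b)) * exp (\<beta>*c^2/(1-2*b)) / sqrt r"
    using rpos
  proof (intro divide_right_mono mult_mono)
    have "1 - 2*b \<le> exp (-2*b)" using exp_ge_add_one_self[of "-2*b"] by simp
    hence "exp (2*b) * (1 - 2*b) \<le> 1"
    proof -
      have "exp (2*b) * (1 - 2*b) \<le> exp (2*b) * exp (-2*b)" using \<open>1 - 2*b \<le> exp (-2*b)\<close> by (intro mult_left_mono) auto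
      also have "\<dots> = 1" by (simp flip: exp_add)
      finally show ?thesis .
    qed
    hence "(exp b)^2 * (1-2*b) \<le> 1" by (simp add: power2_eq_square flip: exp_add)
    hence "(exp b * sqrt (1-2*b))^2 \<le> 1^2" using b1 by (simp add: power_mult_distrib)
    hence "exp b * sqrt (1-2*b) \<le> 1"
      by (rule power2_le_imp_le) simp
    then show "exp b \<le> 1 / sqrt (1 - 2*b)" using b1 by (simp add: field_simps)
    have "(1 + 2*b) * (1-2*b) \<le> 1" by (simp add: algebra_simps)
    hence "1 + 2*b \<le> 1/(1-2*b)" using b1 by (simp add: field_simps)
    hence "\<beta>*c^2*(1+2*b) \<le> \<beta>*c^2 * (1/(1-2*b))" using \<beta>0
      by (intro mult_left_mono) auto
    then show "exp (\<beta>*c^2*(1+2*b)) \<le> exp (\<beta>*c^2/(1-2*b))" by simp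
  qed (use b1 rpos in auto)
  also have "(1 / sqrt (1 - 2*b)) * exp (\<beta>*c^2/(1-2*b)) / sqrt r = exp (t*c^2/(1-2*t*(a^2+s))) / sqrt (1-2*t*(a^2+s))"
  proof -
    have 1: "t*c^2/(1-2*t*(a^2+s)) = \<beta>*c^2/(1-2*b)" unfolding r' \<beta>_def using rpos b1 by simp
    have 2: "sqrt (1-2*t*(a^2+s)) = sqrt r * sqrt (1-2*b)" unfolding r' by (simp add: real_sqrt_mult)
    show ?thesis unfolding 1 2 by simp
  qed
  finally show ?thesis unfolding r_def .
qed

lemma mgf_gen:
  fixes t :: real
  assumes "t \<ge> 0" "2*t*nsq D y < 1"
  shows "Es D (\<lambda>e. exp (t * (c + rowdot e y)^2)) \<le> exp (t*c^2/(1-2*t*nsq D y)) / sqrt (1-2*t*nsq D y)"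
  using assms
proof (induction D arbitrary: c y)
  case 0 then show ?case by (simp add: nsq_def)
next
  case (Suc D)
  define y' where "y' = (\<lambda>l. y (Suc l))"
  define a where "a = y 0"
  have sq: "nsq (Suc D) y = a^2 + nsq D y'" by (simp add: nsq_Suc a_def y'_def)
  have lt: "2*t*nsq D y' < 1"
    using Suc.prems sq nsq_nonneg[of D y'] by (smt (verit) mult_left_mono zero_le_power2)
  have "Es (Suc D) (\<lambda>e. exp (t * (c + rowdot e y)^2))
      = (Es D (\<lambda>e. exp (t * ((c + (-1)*a) + rowdot e y')^2)) + Es D (\<lambda>e. exp (t * ((c + 1*a) + rowdot e y')^2))) / 2"
    by (simp add: a_def y'_def algebra_simps)
  also have "\<dots> \<le> (exp (t*(c + (-1)*a)^2/(1-2*t * nsq D y')) / sqrt (1-2*t * nsq D y') + exp (t*(c + 1*a)^2/(1-2*t * nsq D y')) / sqrt (1-2*t * nsq D y')) / 2"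
    by (intro divide_right_mono add_mono Suc.IH Suc.prems lt) auto
  also have "\<dots> \<le> exp (t*c^2/(1-2*t*(a^2 + nsq D y'))) / sqrt (1-2*t*(a^2 + nsq D y'))"
    by (rule mgf_step) (use Suc.prems sq nsq_nonneg in auto)
  finally show ?case by (simp add: sq)
qed

lemma second_moment: "Es D (\<lambda>e. (c + rowdot e y)^2) = c^2 + nsq D y"
proof (induction D arbitrary: c y)
  case 0 then show ?case by (simp add: nsq_def)
next
  case (Suc D)
  have "Es (Suc D) (\<lambda>e. (c + rowdot e y)^2)
      = (Es D (\<lambda>e. ((c - y 0) + rowdot e (\<lambda>l. y (Suc l)))^2) + Es D (\<lambda>e. ((c + y 0) + rowdot e (\<lambda>l. y (Suc l)))^2)) / 2"
    by (simp add: algebra_simps)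
  also have "\<dots> = c^2 + nsq (Suc D) y" unfolding Suc.IH nsq_Suc by (simp add: power2_eq_square algebra_simps)
  finally show ?case .
qed

lemma sqrt_exp: "sqrt (exp x) = exp (x/2)"
proof -
  have "exp x = (exp (x/2))^2" by (simp add: power2_eq_square flip: exp_add)
  then show ?thesis by simp
qed

lemma mgf_upper:
  fixes \<tau> s :: real
  assumes "0 \<le> \<tau>" "\<tau> \<le> 1/4" "nsq D y = s" "s > 0"
  shows "Es D (\<lambda>e. exp ((\<tau>/s) * (rowdot e y)^2)) \<le> exp (\<tau> + 4*\<tau>^2)"
proof -
  have "2*(\<tau>/s)*nsq D y = 2*\<tau>" using assms by simp
  hence "Es D (\<lambda>e. exp ((\<tau>/s) * (0 + rowdot e y)^2)) \<le> exp ((\<tau>/s)*0^2/(1-2*\<tau>)) / sqrt (1-2*\<tau>)"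
    using mgf_gen[of "\<tau>/s" D y 0] assms by simp
  hence 1: "Es D (\<lambda>e. exp ((\<tau>/s) * (rowdot e y)^2)) \<le> 1 / sqrt (1-2*\<tau>)" by simp
  have "- (2*\<tau>) - 2 * (2*\<tau>)^2 \<le> ln (1 - 2*\<tau>)"
    by (rule ln_one_minus_pos_lower_bound) (use assms in auto)
  hence "exp (-(2*\<tau>) - 2*(2*\<tau>)^2) \<le> exp (ln (1 - 2*\<tau>))" by simp
  also have "exp (ln (1 - 2*\<tau>)) = 1 - 2*\<tau>" using assms by simp
  finally have "exp (-(2*\<tau>) - 2*(2*\<tau>)^2) \<le> 1 - 2*\<tau>" .
  hence "sqrt (exp (-(2*\<tau>) - 2*(2*\<tau>)^2)) \<le> sqrt (1 - 2*\<tau>)" by (rule real_sqrt_le_mono)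
  moreover have "(-(2*\<tau>) - 2*(2*\<tau>)^2)/2 = -(\<tau> + 4*\<tau>^2)" by (simp add: power2_eq_square)
  ultimately have "exp (-(\<tau> + 4*\<tau>^2)) \<le> sqrt (1 - 2*\<tau>)" by (simp only: sqrt_exp)
  hence "1 / sqrt (1-2*\<tau>) \<le> 1 / exp (-(\<tau> + 4*\<tau>^2))"
    using assms by (intro divide_left_mono mult_pos_pos) auto
  also have "\<dots> = exp (\<tau> + 4*\<tau>^2)" by (metis exp_minus inverse_eq_divide inverse_inverse_eq)
  finally show ?thesis using 1 by linarith
qed

lemma exp_lower_poly:
  fixes x :: real assumes "0 \<le> x"
  shows "(\<Sum>n<k. inverse (fact n) * x^n) \<le> exp x"
proof -
  have "(\<Sum>n<k. inverse (fact n) * x^n) \<le> (\<Sum>n. inverse (fact n) * x^n)"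
    using assms by (auto simp add: zero_le_mult_iff intro: sum_le_suminf [OF summable_exp])
  then show ?thesis by (simp add: exp_def)
qed

lemma exp_lower_quad: "0 \<le> x \<Longrightarrow> 1 + x + x^2/2 \<le> exp x" for x :: real
  using exp_lower_poly[of x 3] by (simp add: eval_nat_numeral field_simps)

lemma exp_lower_cubic: "0 \<le> x \<Longrightarrow> 1 + x + x^2/2 + x^3/6 \<le> exp x" for x :: real
  using exp_lower_poly[of x 4] by (simp add: eval_nat_numeral field_simps)

lemma exp_neg_upper: "0 \<le> v \<Longrightarrow> exp (-v) \<le> 1 - v + v^2/2" for v :: real
proof -
  assume v: "0 \<le> v"
  have p: "0 < 1 + v + v^2/2 + v^3/6" using v by (simp add: add_pos_nonneg)
  have "1 \<le> (1 - v + v^2/2) * (1 + v + v^2/2 + v^3/6)"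
  proof -
    have "(1 - v + v^2/2) * (1 + v + v^2/2 + v^3/6) = 1 + v^3/6 + v^4/12 + v^5/12"
      by (simp add: eval_nat_numeral field_simps)
    also have "\<dots> \<ge> 1" using v by simp
    finally show ?thesis by simp
  qed
  hence "1 / (1 + v + v^2/2 + v^3/6) \<le> 1 - v + v^2/2" using p by (simp add: field_simps)
  moreover have "exp (-v) \<le> 1 / (1 + v + v^2/2 + v^3/6)"
    using exp_lower_cubic[OF v] p by (simp add: exp_minus field_simps)
  ultimately show ?thesis by linarith
qed

lemma Es_lin: "Es D (\<lambda>e. a + b * f e + c * g e) = a + b * Es D f + c * Es D g"
  by (simp add: Es_add Es_cmult Es_const)

lemma mgf_lower:
  fixes \<tau> s :: real
  assumes "0 \<le> \<tau>" "\<tau> \<le> 1/4" "nsq D y = s" "s > 0"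
  shows "Es D (\<lambda>e. exp (-((\<tau>/s) * (rowdot e y)^2))) \<le> exp (-\<tau> + 3*\<tau>^2)"
proof -
  define Y where "Y = (\<lambda>e. rowdot e y)"
  have m2: "Es D (\<lambda>e. (Y e)^2) = s" using second_moment[of D 0 y] assms by (simp add: Y_def)
  have "Es D (\<lambda>e. exp ((1/4/s) * (0 + rowdot e y)^2)) \<le> exp ((1/4/s)*0^2/(1-2*(1/4/s)*nsq D y)) / sqrt (1-2*(1/4/s)*nsq D y)"
    using assms by (intro mgf_gen) auto
  hence mg: "Es D (\<lambda>e. exp ((1/4/s) * (Y e)^2)) \<le> 1 / sqrt (1/2)" using assms by (simp add: Y_def)
  have "sqrt 2 \<le> 1.4375" by (rule real_le_lsqrt) (auto simp: power2_eq_square)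
  hence s2: "1 / sqrt (1/2) \<le> (1.4375::real)" by (simp add: real_sqrt_divide)
  have pw4: "(Y e)^4 \<le> 32* s^2 * exp ((1/4/s) * (Y e)^2) + (-32* s^2) * 1 + (-8* s) * (Y e)^2" for e
  proof -
    define u where "u = (Y e)^2/(4* s)"
    have "0 \<le> u" using assms by (simp add: u_def)
    from exp_lower_quad[OF this] have "u^2 \<le> 2*(exp u - 1 - u)" by simp
    hence 1: "16* s^2*u^2 \<le> 16* s^2*(2*(exp u - 1 - u))" by (rule mult_left_mono) simp
    have 2: "16* s^2*u^2 = (Y e)^4" using assms by (simp add: u_def power2_eq_square field_simps eval_nat_numeral)
    have 3: "16* s^2*u = 4* s*(Y e)^2" using assms by (simp add: u_def power2_eq_square field_simps)
    have 4: "(1/4/s) * (Y e)^2 = u" by (simp add: u_def)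
    show ?thesis unfolding 4 using 1 2 3 by (simp add: algebra_simps)
  qed
  have m4: "Es D (\<lambda>e. (Y e)^4) \<le> 6* s^2"
  proof -
    have "Es D (\<lambda>e. (Y e)^4) \<le> Es D (\<lambda>e. (-32* s^2) + (-8* s) * (Y e)^2 + 32* s^2 * exp ((1/4/s) * (Y e)^2))"
      by (rule Es_mono) (smt (verit) pw4)
    also have "\<dots> = -32* s^2 + (-8* s) * s + 32* s^2 * Es D (\<lambda>e. exp ((1/4/s) * (Y e)^2))"
      unfolding Es_lin m2 ..
    also have "\<dots> \<le> -32* s^2 + (-8* s) * s + 32* s^2 * 1.4375"
      using mg s2 assms by (intro add_left_mono mult_left_mono) auto
    also have "\<dots> = 6* s^2" by (simp add: power2_eq_square)
    finally show ?thesis .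
  qed
  have "Es D (\<lambda>e. exp (-((\<tau>/s) * (rowdot e y)^2))) \<le> Es D (\<lambda>e. 1 + (-(\<tau>/s)) * (Y e)^2 + ((\<tau>/s)^2/2) * (Y e)^4)"
  proof (rule Es_mono)
    fix e
    have "exp (-((\<tau>/s) * (Y e)^2)) \<le> 1 - (\<tau>/s) * (Y e)^2 + ((\<tau>/s) * (Y e)^2)^2/2"
      by (rule exp_neg_upper) (use assms in simp)
    then show "exp (-((\<tau>/s) * (rowdot e y)^2)) \<le> 1 + (-(\<tau>/s)) * (Y e)^2 + ((\<tau>/s)^2/2) * (Y e)^4"
      by (simp add: Y_def power_mult_distrib eval_nat_numeral mult_ac)
  qed
  also have "\<dots> = 1 + (-(\<tau>/s)) * s + ((\<tau>/s)^2/2) * Es D (\<lambda>e. (Y e)^4)"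
    unfolding Es_lin m2 ..
  also have "\<dots> \<le> 1 + (-(\<tau>/s)) * s + ((\<tau>/s)^2/2) * (6* s^2)"
    using m4 by (intro add_left_mono mult_left_mono) auto
  also have "\<dots> = 1 + (-\<tau> + 3*\<tau>^2)" using assms by (simp add: power2_eq_square field_simps)
  also have "\<dots> \<le> exp (-\<tau> + 3*\<tau>^2)" by (rule exp_ge_add_one_self)
  finally show ?thesis .
qed

lemma Es_exists: "Es D f < c \<Longrightarrow> \<exists>e. f e < c"
proof (induction D arbitrary: f)
  case 0 then show ?case by auto
next
  case (Suc D)
  then have "Es D (\<lambda>e. f ((-1) # e)) < c \<or> Es D (\<lambda>e. f (1 # e)) < c" by auto
  then show ?case using Suc.IH by blast
qed

fun Em :: "nat \<Rightarrow> nat \<Rightarrow> (real list list \<Rightarrow> real) \<Rightarrow> real" where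
  "Em 0 D F = F []"
| "Em (Suc d) D F = Es D (\<lambda>r. Em d D (\<lambda>rs. F (r # rs)))"

lemma Em_mono: "(\<And>rs. F rs \<le> G rs) \<Longrightarrow> Em d D F \<le> Em d D G"
proof (induction d arbitrary: F G)
  case 0 then show ?case by simp
next
  case (Suc d)
  show ?case by (simp, rule Es_mono, rule Suc.IH) (use Suc.prems in auto)
qed

lemma Em_add: "Em d D (\<lambda>rs. F rs + G rs) = Em d D F + Em d D G"
  by (induction d arbitrary: F G) (simp_all add: Es_add)

lemma Em_cmult: "Em d D (\<lambda>rs. c * F rs) = c * Em d D F"
  by (induction d arbitrary: F) (simp_all add: Es_cmult)

lemma Em_const: "Em d D (\<lambda>rs. c) = c"
  by (induction d) (simp_all add: Es_const)

lemma Em_sum: "finite A \<Longrightarrow> Em d D (\<lambda>rs. \<Sum>y\<in>A. F y rs) = (\<Sum>y\<in>A. Em d D (F y))"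
  by (induction A rule: finite_induct) (simp_all add: Em_const Em_add)

lemma Em_prod: "Em d D (\<lambda>rs. prod_list (map g rs)) = (Es D g)^d"
proof (induction d)
  case 0 then show ?case by simp
next
  case (Suc d)
  have "Em (Suc d) D (\<lambda>rs. prod_list (map g rs)) = Es D (\<lambda>r. g r * Em d D (\<lambda>rs. prod_list (map g rs)))"
    by (simp add: Em_cmult)
  also have "\<dots> = Es D (\<lambda>r. (Es D g)^d * g r)" unfolding Suc.IH by (simp add: mult.commute)
  also have "\<dots> = (Es D g)^(Suc d)" unfolding Es_cmult by (simp add: mult.commute)
  finally show ?case .
qed

lemma Em_exists: "Em d D F < c \<Longrightarrow> \<exists>rs. length rs = d \<and> F rs < c"
proof (induction d arbitrary: F)
  case 0 then show ?case by auto
next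
  case (Suc d)
  then obtain r where "Em d D (\<lambda>rs. F (r # rs)) < c" using Es_exists by fastforce
  then obtain rs where "length rs = d" "F (r # rs) < c" using Suc.IH by blast
  then show ?case by (intro exI[of _ "r # rs"]) auto
qed

lemma exp_sum_list: "exp ((c::real) * sum_list (map f rs)) = prod_list (map (\<lambda>r. exp (c * f r)) rs)"
proof (induction rs)
  case Nil then show ?case by simp
next
  case (Cons a rs)
  have "exp (c * sum_list (map f (a # rs))) = exp (c * f a + c * sum_list (map f rs))"
    by (simp add: distrib_left)
  also have "\<dots> = exp (c * f a) * exp (c * sum_list (map f rs))" by (rule exp_add)
  finally show ?case using Cons.IH by simp
qed

lemma Es_nonneg: "(\<And>e. 0 \<le> f e) \<Longrightarrow> 0 \<le> Es D f"
  using Es_mono[of "\<lambda>e. 0" f D] by (simp add: Es_const)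

lemma Es_rowdotD: "Es D (\<lambda>r. exp (u * (rowdotD D r y)^2)) = Es D (\<lambda>r. exp (u * (rowdot r y)^2))"
  by (rule Es_cong) (simp add: rowdot_eq)

lemma Em_tail:
  fixes c u B :: real
  assumes "Es D (\<lambda>r. exp (u * (rowdotD D r y)^2)) \<le> exp B"
  shows "Em d D (\<lambda>rs. exp (u * (\<Sum>r\<leftarrow>rs. (rowdotD D r y)^2) + c)) \<le> exp (c + d * B)"
proof -
  have "Em d D (\<lambda>rs. exp (u * (\<Sum>r\<leftarrow>rs. (rowdotD D r y)^2) + c))
      = Em d D (\<lambda>rs. exp c * prod_list (map (\<lambda>r. exp (u * (rowdotD D r y)^2)) rs))"
    by (simp add: exp_add exp_sum_list mult.commute)
  also have "\<dots> = exp c * (Es D (\<lambda>r. exp (u * (rowdotD D r y)^2)))^d"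
    by (simp add: Em_cmult Em_prod)
  also have "\<dots> \<le> exp c * (exp B)^d"
    by (intro mult_left_mono power_mono assms Es_nonneg) auto
  also have "\<dots> = exp (c + d * B)" by (simp add: exp_add exp_of_nat_mult)
  finally show ?thesis .
qed

lemma nsq_zero: "nsq D y = 0 \<Longrightarrow> l < D \<Longrightarrow> y l = 0"
  unfolding nsq_def by (subst (asm) sum_nonneg_eq_0_iff) auto

lemma rowdotD_zero: "nsq D y = 0 \<Longrightarrow> rowdotD D r y = 0"
  unfolding rowdotD_def using nsq_zero by (auto intro!: sum.neutral)

lemma JL:
  fixes S :: "(nat \<Rightarrow> real) set" and P \<delta> :: real
  assumes S: "finite S" "real (card S) \<le> P" and P: "2 \<le> P"
    and \<delta>: "0 < \<delta>" "\<delta> \<le> 1/2" and d: "33 * ln P / \<delta>^2 \<le> real d"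
  shows "\<exists>rs. length rs = d \<and> (\<forall>y\<in>S. (1-\<delta>) * nsq D y \<le> (\<Sum>r\<leftarrow>rs. (rowdotD D r y)^2) / d
                                  \<and> (\<Sum>r\<leftarrow>rs. (rowdotD D r y)^2) / d \<le> (1+\<delta>) * nsq D y)"
proof -
  have lnP: "ln P > 0" using P by simp
  have ln2P: "ln (2*P) \<le> 2 * ln P"
  proof -
    have "ln (2*P) = ln 2 + ln P" using P by (simp add: ln_mult)
    moreover have "ln 2 \<le> ln P" using P by simp
    ultimately show ?thesis by simp
  qed
  have dpos: "real d > 0" using d lnP \<delta> by (smt (verit) divide_pos_pos zero_less_power)
  define Z where "Z = (\<lambda>y rs. (\<Sum>r\<leftarrow>rs. (rowdotD D r y)^2))"
  define S' where "S' = {y\<in>S. nsq D y > 0}"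
  define \<tau>1 where "\<tau>1 = \<delta>/8"
  define \<tau>2 where "\<tau>2 = \<delta>/6"
  define g1 where "g1 = (\<lambda>y rs. exp ((\<tau>1 / nsq D y) * Z y rs + (- (\<tau>1 * d * (1+\<delta>)))))"
  define g2 where "g2 = (\<lambda>y rs. exp ((-(\<tau>2 / nsq D y)) * Z y rs + \<tau>2 * d * (1-\<delta>)))"
  define F where "F = (\<lambda>rs. \<Sum>y\<in>S'. g1 y rs + g2 y rs)"
  define q where "q = exp (- (d * \<delta>^2 / 16))"
  have fS': "finite S'" using S by (simp add: S'_def)
  have b1: "Em d D (g1 y) \<le> q" if "y \<in> S'" for y
  proof -
    have sp: "nsq D y > 0" using that by (simp add: S'_def)
    have "Es D (\<lambda>r. exp ((\<tau>1 / nsq D y) * (rowdotD D r y)^2)) \<le> exp (\<tau>1 + 4*\<tau>1^2)"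
      unfolding Es_rowdotD using \<delta> sp by (intro mgf_upper) (auto simp: \<tau>1_def)
    from Em_tail[OF this, of d "- (\<tau>1 * d * (1+\<delta>))"]
    have "Em d D (g1 y) \<le> exp (- (\<tau>1 * d * (1+\<delta>)) + d * (\<tau>1 + 4*\<tau>1^2))"
      by (simp add: g1_def Z_def)
    also have "- (\<tau>1 * d * (1+\<delta>)) + d * (\<tau>1 + 4*\<tau>1^2) = - (d * \<delta>^2 / 16)"
      by (simp add: \<tau>1_def power2_eq_square field_simps)
    finally show ?thesis by (simp add: q_def)
  qed
  have b2: "Em d D (g2 y) \<le> q" if "y \<in> S'" for y
  proof -
    have sp: "nsq D y > 0" using that by (simp add: S'_def)
    have "Es D (\<lambda>r. exp ((-(\<tau>2 / nsq D y)) * (rowdotD D r y)^2)) \<le> exp (-\<tau>2 + 3*\<tau>2^2)"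
      unfolding Es_rowdotD using \<delta> sp mgf_lower[of \<tau>2 D y "nsq D y"] by (auto simp: \<tau>2_def)
    from Em_tail[OF this, of d "\<tau>2 * d * (1-\<delta>)"]
    have "Em d D (g2 y) \<le> exp (\<tau>2 * d * (1-\<delta>) + d * (-\<tau>2 + 3*\<tau>2^2))"
      by (simp add: g2_def Z_def)
    also have "\<tau>2 * d * (1-\<delta>) + d * (-\<tau>2 + 3*\<tau>2^2) = - (d * \<delta>^2 / 12)"
      by (simp add: \<tau>2_def power2_eq_square field_simps)
    also have "exp (- (d * \<delta>^2 / 12)) \<le> q"
      unfolding q_def using dpos by (simp add: field_simps)
    finally show ?thesis .
  qed
  have "Em d D F = (\<Sum>y\<in>S'. Em d D (g1 y) + Em d D (g2 y))"
    unfolding F_def by (simp add: Em_sum[OF fS'] Em_add)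
  also have "\<dots> \<le> (\<Sum>y\<in>S'. 2 * q)"
    by (intro sum_mono) (use b1 b2 in fastforce)
  also have "\<dots> = card S' * (2*q)" by simp
  also have "\<dots> \<le> P * (2*q)"
  proof -
    have "card S' \<le> card S" using S by (intro card_mono) (auto simp: S'_def)
    then show ?thesis using S by (intro mult_right_mono) (auto simp: q_def)
  qed
  also have "\<dots> < 1"
  proof -
    have "ln (2*P) < d * \<delta>^2 / 16"
    proof -
      have "33 * ln P \<le> real d * \<delta>^2" using d \<delta> by (simp add: field_simps)
      then show ?thesis using ln2P lnP by simp
    qed
    hence "q < exp (- ln (2*P))" unfolding q_def by simp
    also have "exp (- ln (2*P)) = 1 / (2*P)" using P by (simp add: exp_minus inverse_eq_divide)
    finally show ?thesis using P by (simp add: field_simps)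
  qed
  finally obtain rs where rs: "length rs = d" "F rs < 1" using Em_exists by blast
  have nn: "0 \<le> g1 y rs + g2 y rs" for y by (simp add: g1_def g2_def add_nonneg_nonneg)
  have each: "g1 y rs + g2 y rs < 1" if "y \<in> S'" for y
  proof -
    have "g1 y rs + g2 y rs \<le> F rs" unfolding F_def
      by (rule member_le_sum[where f = "\<lambda>y. g1 y rs + g2 y rs"]) (use that fS' nn in auto)
    then show ?thesis using rs by simp
  qed
  have main: "\<forall>y\<in>S. (1-\<delta>) * nsq D y \<le> (\<Sum>r\<leftarrow>rs. (rowdotD D r y)^2) / d
        \<and> (\<Sum>r\<leftarrow>rs. (rowdotD D r y)^2) / d \<le> (1+\<delta>) * nsq D y"
  proof
    fix y assume "y \<in> S"
    show "(1-\<delta>) * nsq D y \<le> (\<Sum>r\<leftarrow>rs. (rowdotD D r y)^2) / d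
        \<and> (\<Sum>r\<leftarrow>rs. (rowdotD D r y)^2) / d \<le> (1+\<delta>) * nsq D y"
    proof (cases "nsq D y = 0")
      case True
      then show ?thesis by (simp add: rowdotD_zero)
    next
      case False
      then have sp: "nsq D y > 0" using nsq_nonneg[of D y] by simp
      then have yS: "y \<in> S'" using \<open>y \<in> S\<close> by (simp add: S'_def)
      have g1l: "g1 y rs < 1" and g2l: "g2 y rs < 1"
      proof -
        have "0 < g1 y rs" "0 < g2 y rs" by (simp_all add: g1_def g2_def)
        then show "g1 y rs < 1" "g2 y rs < 1" using each[OF yS] by linarith+
      qed
      have t1: "\<tau>1 > 0" "\<tau>2 > 0" using \<delta> by (auto simp: \<tau>1_def \<tau>2_def)
      from g1l have "(\<tau>1 / nsq D y) * Z y rs < \<tau>1 * d * (1+\<delta>)" by (simp add: g1_def)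
      hence "\<tau>1 * (Z y rs / nsq D y) < \<tau>1 * (d * (1+\<delta>))" by (simp add: mult_ac)
      hence "Z y rs / nsq D y < d * (1+\<delta>)" using t1 mult_less_cancel_left_pos by blast
      hence "Z y rs < d * (1+\<delta>) * nsq D y" using sp by (simp add: pos_divide_less_eq)
      hence u: "Z y rs / d \<le> (1+\<delta>) * nsq D y" using dpos by (simp add: field_simps)
      from g2l have "\<tau>2 * d * (1-\<delta>) < (\<tau>2 / nsq D y) * Z y rs" by (simp add: g2_def)
      hence "\<tau>2 * (d * (1-\<delta>)) < \<tau>2 * (Z y rs / nsq D y)" by (simp add: mult_ac)
      hence "d * (1-\<delta>) < Z y rs / nsq D y" using t1 mult_less_cancel_left_pos by blast
      hence "d * (1-\<delta>) * nsq D y < Z y rs" using sp by (simp add: pos_less_divide_eq)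
      hence l: "(1-\<delta>) * nsq D y \<le> Z y rs / d" using dpos by (simp add: field_simps)
      show ?thesis using u l by (simp add: Z_def)
    qed
  qed
  show ?thesis using rs(1) main by blast
qed

lemma avg_exists:
  fixes \<nu> f :: "nat \<Rightarrow> real"
  assumes "\<forall>i<n. \<nu> i \<ge> 0" "(\<Sum>i<n. \<nu> i) = 1"
  shows "\<exists>i<n. f i \<le> (\<Sum>i<n. \<nu> i * f i)"
proof (rule ccontr)
  assume "\<not> ?thesis"
  hence gt: "\<forall>i<n. f i > (\<Sum>i<n. \<nu> i * f i)" by auto
  define A where "A = (\<Sum>i<n. \<nu> i * f i)"
  have "(\<Sum>i<n. \<nu> i * (f i - A)) = A - (\<Sum>i<n. \<nu> i) * A"
    by (simp add: right_diff_distrib sum_subtractf sum_distrib_right A_def)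
  also have "\<dots> = 0" using assms by simp
  finally have z: "(\<Sum>i<n. \<nu> i * (f i - A)) = 0" .
  have nn: "\<forall>i\<in>{..<n}. 0 \<le> \<nu> i * (f i - A)"
  proof
    fix i assume "i \<in> {..<n}"
    then have "0 \<le> \<nu> i" "A < f i" using gt assms(1) unfolding A_def by auto
    then show "0 \<le> \<nu> i * (f i - A)" by simp
  qed
  have z2: "\<forall>i\<in>{..<n}. \<nu> i * (f i - A) = 0" using z nn sum_nonneg_eq_0_iff[of "{..<n}" "\<lambda>i. \<nu> i * (f i - A)"] by blast
  have "\<forall>i<n. \<nu> i = 0"
  proof (intro allI impI)
    fix i assume "i < n"
    then have "\<nu> i * (f i - A) = 0" "A < f i" using z2 gt unfolding A_def by auto
    then show "\<nu> i = 0" by simp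
  qed
  hence "(\<Sum>i<n. \<nu> i) = 0" by simp
  then show False using assms by simp
qed

lemma coord_identity:
  fixes \<nu> p :: "nat \<Rightarrow> real" and w :: real
  assumes "(\<Sum>i<n. \<nu> i) = 1"
  shows "(\<Sum>i<n. \<nu> i * (w - p i)^2) = (w - (\<Sum>i<n. \<nu> i * p i))^2 - (\<Sum>i<n. \<nu> i * p i)^2 + (\<Sum>i<n. \<nu> i * (p i)^2)"
proof -
  have "(\<Sum>i<n. \<nu> i * (w - p i)^2) = w^2 * (\<Sum>i<n. \<nu> i) - 2*w*(\<Sum>i<n. \<nu> i * p i) + (\<Sum>i<n. \<nu> i * (p i)^2)"
  proof -
    have "(\<Sum>i<n. \<nu> i * (w - p i)^2) = (\<Sum>i<n. w^2 * \<nu> i - 2*w*(\<nu> i * p i) + \<nu> i * (p i)^2)"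
      by (intro sum.cong refl) (simp add: power2_eq_square algebra_simps)
    also have "\<dots> = (\<Sum>i<n. w^2 * \<nu> i) - (\<Sum>i<n. 2*w*(\<nu> i * p i)) + (\<Sum>i<n. \<nu> i * (p i)^2)"
      by (simp only: sum.distrib sum_subtractf)
    also have "\<dots> = w^2 * (\<Sum>i<n. \<nu> i) - 2*w*(\<Sum>i<n. \<nu> i * p i) + (\<Sum>i<n. \<nu> i * (p i)^2)"
      by (simp only: sum_distrib_left)
    finally show ?thesis .
  qed
  then show ?thesis using assms by (simp add: power2_eq_square left_diff_distrib right_diff_distrib)
qed

lemma maurey:
  fixes p :: "nat \<Rightarrow> nat \<Rightarrow> real" and \<nu> :: "nat \<Rightarrow> real"
  assumes nu: "\<forall>i<n. \<nu> i \<ge> 0" "(\<Sum>i<n. \<nu> i) = 1"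
  shows "\<exists>js. length js = k \<and> set js \<subseteq> {..<n} \<and>
     nsq d (\<lambda>l. real k * (\<Sum>i<n. \<nu> i * p i l) - (\<Sum>i\<leftarrow>js. p i l)) \<le> k * (\<Sum>i<n. \<nu> i * nsq d (p i))"
proof (induction k)
  case 0 then show ?case by (intro exI[of _ "[]"]) (simp add: nsq_def)
next
  case (Suc k)
  define x where "x = (\<lambda>l. \<Sum>i<n. \<nu> i * p i l)"
  define T where "T = (\<Sum>i<n. \<nu> i * nsq d (p i))"
  from Suc.IH obtain js where js0: "length js = k" "set js \<subseteq> {..<n}"
     "nsq d (\<lambda>l. real k * (\<Sum>i<n. \<nu> i * p i l) - (\<Sum>i\<leftarrow>js. p i l)) \<le> k * (\<Sum>i<n. \<nu> i * nsq d (p i))"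
    by blast
  have js: "length js = k" "set js \<subseteq> {..<n}"
     "nsq d (\<lambda>l. real k * x l - (\<Sum>i\<leftarrow>js. p i l)) \<le> k * T" using js0 by (simp_all add: x_def T_def)
  define z where "z = (\<lambda>l. real k * x l - (\<Sum>i\<leftarrow>js. p i l))"
  define f where "f = (\<lambda>i. nsq d (\<lambda>l. z l + x l - p i l))"
  have "(\<Sum>i<n. \<nu> i * f i) = (\<Sum>l<d. \<Sum>i<n. \<nu> i * ((z l + x l) - p i l)^2)"
    unfolding f_def nsq_def sum_distrib_left by (rule sum.swap)
  also have "\<dots> = (\<Sum>l<d. (z l)^2 - (x l)^2 + (\<Sum>i<n. \<nu> i * (p i l)^2))"
    by (intro sum.cong refl) (simp add: coord_identity[OF nu(2)] x_def)
  also have "\<dots> \<le> (\<Sum>l<d. (z l)^2 + (\<Sum>i<n. \<nu> i * (p i l)^2))"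
    by (intro sum_mono) simp
  also have "\<dots> = nsq d z + T"
    unfolding nsq_def T_def sum.distrib sum_distrib_left by (simp add: sum.swap[of _ "{..<n}" "{..<d}"])
  also have "\<dots> \<le> Suc k * T" using js(3) unfolding z_def by (simp add: algebra_simps)
  finally have avg: "(\<Sum>i<n. \<nu> i * f i) \<le> Suc k * T" .
  obtain i where i: "i < n" "f i \<le> (\<Sum>i<n. \<nu> i * f i)" using avg_exists[OF nu] by blast
  show ?case
  proof (intro exI[of _ "js @ [i]"] conjI)
    show "length (js @ [i]) = Suc k" using js by simp
    show "set (js @ [i]) \<subseteq> {..<n}" using js i by auto
    have "(\<lambda>l. real (Suc k) * (\<Sum>i<n. \<nu> i * p i l) - (\<Sum>i\<leftarrow>js @ [i]. p i l)) = (\<lambda>l. z l + x l - p i l)"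
      by (simp add: z_def x_def algebra_simps)
    then show "nsq d (\<lambda>l. real (Suc k) * (\<Sum>i<n. \<nu> i * p i l) - (\<Sum>i\<leftarrow>js @ [i]. p i l)) \<le> Suc k * (\<Sum>i<n. \<nu> i * nsq d (p i))"
      using i avg unfolding f_def T_def by simp
  qed
qed

lemma dinner_self: "dinner d v v = nsq d v"
  unfolding dinner_def nsq_def by (simp add: power2_eq_square)

lemma nsq_L2: "sqrt (nsq d v) = L2_set v {..<d}"
  unfolding nsq_def L2_set_def ..

lemma dinner_CS: "dinner d u v \<le> sqrt (nsq d u) * sqrt (nsq d v)"
proof -
  have "dinner d u v \<le> (\<Sum>l<d. \<bar>u l\<bar> * \<bar>v l\<bar>)"
    unfolding dinner_def by (intro sum_mono) (simp add: abs_mult[symmetric])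
  also have "\<dots> \<le> L2_set u {..<d} * L2_set v {..<d}" by (rule L2_set_mult_ineq)
  finally show ?thesis by (simp add: nsq_L2)
qed

lemma nrm_triangle: "sqrt (nsq d (\<lambda>l. u l + v l)) \<le> sqrt (nsq d u) + sqrt (nsq d v)"
  unfolding nsq_L2 by (rule L2_set_triangle_ineq)

lemma nsq_diff_le: "nsq d (\<lambda>l. a l - w l) \<le> 2 * nsq d a + 2 * nsq d w"
proof -
  have "nsq d (\<lambda>l. a l - w l) \<le> (\<Sum>l<d. 2 * (a l)^2 + 2 * (w l)^2)"
    unfolding nsq_def
  proof (intro sum_mono)
    fix l
    have "0 \<le> (a l + w l)^2" by simp
    then show "(a l - w l)^2 \<le> 2 * (a l)^2 + 2 * (w l)^2" by (simp add: power2_eq_square algebra_simps)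
  qed
  also have "\<dots> = 2 * nsq d a + 2 * nsq d w" unfolding nsq_def by (simp add: sum.distrib sum_distrib_left)
  finally show ?thesis .
qed

definition comb :: "nat \<Rightarrow> (nat \<Rightarrow> real) \<Rightarrow> (nat \<Rightarrow> nat \<Rightarrow> real) \<Rightarrow> nat \<Rightarrow> real" where
  "comb n lam a = (\<lambda>l. \<Sum>j<n. lam j * a j l)"

definition simpl :: "nat \<Rightarrow> (nat \<Rightarrow> real) \<Rightarrow> bool" where
  "simpl n lam \<longleftrightarrow> (\<forall>i<n. lam i \<ge> 0) \<and> (\<Sum>i<n. lam i) = 1"

lemma minnorm:
  fixes a :: "nat \<Rightarrow> nat \<Rightarrow> real" and \<eta> :: real
  assumes n: "n > 0" and a: "\<forall>i<n. nsq d (a i) \<le> 1" and \<eta>: "0 < \<eta>" "\<eta> \<le> 1"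
  shows "\<exists>lam. simpl n lam \<and> (\<forall>i<n. dinner d (comb n lam a) (a i) \<ge> nsq d (comb n lam a) - 4 * sqrt \<eta>)"
proof -
  define K where "K = {nsq d (comb n lam a) | lam. simpl n lam}"
  define \<iota> where "\<iota> = Inf K"
  define e where "e = (\<lambda>i j::nat. if j = i then 1 else (0::real))"
  have e_simp: "simpl n (e i)" if "i < n" for i
    using that by (simp add: simpl_def e_def)
  have e_sum: "(\<Sum>j<n. e i j * f j) = f i" if "i < n" for i and f :: "nat \<Rightarrow> real"
  proof -
    have "(\<Sum>j<n. e i j * f j) = (\<Sum>j<n. if j = i then f j else 0)" by (intro sum.cong) (auto simp: e_def)
    also have "\<dots> = f i" using that by simp
    finally show ?thesis .
  qed
  have e_comb: "comb n (e i) a = a i" if "i < n" for i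
    using e_sum[OF that] by (auto simp: comb_def)
  have Kne: "K \<noteq> {}" using e_simp[OF n] unfolding K_def by blast
  have Kbdd: "bdd_below K" unfolding K_def by (rule bdd_belowI[of _ 0]) (auto simp: nsq_nonneg)
  have low: "\<iota> \<le> nsq d (comb n lam a)" if "simpl n lam" for lam
    unfolding \<iota>_def using that Kbdd by (intro cInf_lower) (auto simp: K_def)
  obtain v where "v \<in> K" "v < \<iota> + \<eta>"
    using cInf_lessD[OF Kne, of "\<iota> + \<eta>"] \<eta> by (auto simp: \<iota>_def)
  then obtain lam where lam: "simpl n lam" "nsq d (comb n lam a) < \<iota> + \<eta>" unfolding K_def by blast
  define w where "w = comb n lam a"
  have w2: "nsq d w \<le> 2"
  proof -
    have "\<iota> \<le> nsq d (a 0)" using low[OF e_simp[OF n]] e_comb[OF n] by simp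
    then show ?thesis using lam(2) a n \<eta> unfolding w_def by force
  qed
  define t where "t = sqrt \<eta>"
  have t: "0 < t" "t \<le> 1" "t^2 = \<eta>" using \<eta> by (auto simp: t_def)
  have "\<forall>i<n. dinner d w (a i) \<ge> nsq d w - 4 * t"
  proof (intro allI impI)
    fix i assume i: "i < n"
    define lam' where "lam' = (\<lambda>j. (1-t) * lam j + t * e i j)"
    have s': "simpl n lam'"
    proof -
      have "(\<Sum>j<n. lam' j) = (1-t) * (\<Sum>j<n. lam j) + t * (\<Sum>j<n. e i j)"
        unfolding lam'_def by (simp add: sum.distrib sum_distrib_left)
      moreover have "(\<Sum>j<n. e i j) = 1" using e_sum[OF i, of "\<lambda>_. 1"] by simp
      ultimately show ?thesis using lam(1) t unfolding simpl_def lam'_def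
        by (auto simp: e_def intro!: add_nonneg_nonneg mult_nonneg_nonneg)
    qed
    have c': "comb n lam' a = (\<lambda>l. w l + t * (a i l - w l))"
    proof
      fix l
      have "comb n lam' a l = (\<Sum>j<n. (1-t) * (lam j * a j l) + t * (e i j * a j l))"
        unfolding comb_def lam'_def by (intro sum.cong refl) (simp add: algebra_simps)
      also have "\<dots> = (1-t) * (\<Sum>j<n. lam j * a j l) + t * (\<Sum>j<n. e i j * a j l)"
        by (simp only: sum.distrib sum_distrib_left)
      also have "(\<Sum>j<n. e i j * a j l) = a i l" using e_sum[OF i] by simp
      finally show "comb n lam' a l = w l + t * (a i l - w l)" by (simp add: w_def comb_def algebra_simps)
    qed
    have exp: "nsq d (\<lambda>l. w l + t * (a i l - w l)) = nsq d w + 2*t*(dinner d w (a i) - nsq d w) + t^2 * nsq d (\<lambda>l. a i l - w l)"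
      unfolding nsq_def dinner_def
      by (simp add: power2_eq_square algebra_simps sum.distrib sum_subtractf sum_distrib_left)
    have "nsq d w - \<eta> < nsq d (comb n lam' a)" using low[OF s'] lam(2) unfolding w_def by simp
    also have "\<dots> \<le> nsq d w + 2*t*(dinner d w (a i) - nsq d w) + t^2 * 6"
    proof -
      have "nsq d (a i) \<le> 1" using a i by simp
      then have "nsq d (\<lambda>l. a i l - w l) \<le> 6" using nsq_diff_le[of d "a i" w] w2 by linarith
      then show ?thesis unfolding c' exp by (intro add_left_mono mult_left_mono) auto
    qed
    finally have "- 7 * t^2 < 2*t*(dinner d w (a i) - nsq d w)" using t by simp
    moreover have "2*t*(- 4 * t) < - 7 * t^2" using t \<eta> by (simp add: power2_eq_square)
    ultimately have "2*t*(- 4 * t) < 2*t*(dinner d w (a i) - nsq d w)" by linarith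
    hence "(2*t) * (- 4 * t) < (2*t) * (dinner d w (a i) - nsq d w)" by (simp only: mult.assoc)
    hence "- 4 * t < dinner d w (a i) - nsq d w" by (rule mult_left_less_imp_less) (use t in simp)
    then show "dinner d w (a i) \<ge> nsq d w - 4 * t" by simp
  qed
  then show ?thesis using lam(1) unfolding w_def t_def by blast
qed

lemma nsq_scale: "nsq d (\<lambda>l. c * v l) = c^2 * nsq d v"
  unfolding nsq_def by (simp add: power_mult_distrib sum_distrib_left)

lemma dinner_scale_left: "dinner d (\<lambda>l. c * u l) v = c * dinner d u v"
  unfolding dinner_def by (simp add: sum_distrib_left mult.assoc)

lemma dinner_scale_right: "dinner d u (\<lambda>l. c * v l) = c * dinner d u v"
  unfolding dinner_def by (simp add: sum_distrib_left mult_ac)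

lemma dinner_comm: "dinner d u v = dinner d v u"
  unfolding dinner_def by (simp add: mult.commute)

lemma dinner_sum_list: "dinner D u (\<lambda>l. \<Sum>i\<leftarrow>js. f i l) = (\<Sum>i\<leftarrow>js. dinner D u (f i))"
  by (induction js) (simp_all add: dinner_def sum.distrib distrib_left)

lemma rowdotD_sum_list: "rowdotD D r (\<lambda>l. \<Sum>i\<leftarrow>js. f i l) = (\<Sum>i\<leftarrow>js. rowdotD D r (f i))"
  by (induction js) (simp_all add: rowdotD_def sum.distrib distrib_left)

lemma rowdotD_scale: "rowdotD D r (\<lambda>l. c * v l) = c * rowdotD D r v"
  unfolding rowdotD_def by (simp add: sum_distrib_left mult_ac)

lemma nsq_minus_comm: "nsq d (\<lambda>l. a l - b l) = nsq d (\<lambda>l. b l - a l)"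
  unfolding nsq_def by (simp add: power2_commute)

lemma nrm_lower: "sqrt (nsq d a) \<ge> sqrt (nsq d b) - sqrt (nsq d (\<lambda>l. a l - b l))"
proof -
  have "sqrt (nsq d b) = sqrt (nsq d (\<lambda>l. a l + (b l - a l)))" by simp
  also have "\<dots> \<le> sqrt (nsq d a) + sqrt (nsq d (\<lambda>l. b l - a l))" by (rule nrm_triangle)
  finally show ?thesis using nsq_minus_comm[of d a b] by simp
qed

lemma sum_list_nth_sum: "(\<Sum>r\<leftarrow>rs. f r) = (\<Sum>k<length rs. f (rs ! k))"
  by (simp add: sum_list_sum_nth atLeast0LessThan)

lemma sum_list_div: "(\<Sum>i\<leftarrow>js. f i) / (c::real) = (\<Sum>i\<leftarrow>js. f i / c)"
  by (induction js) (simp_all add: add_divide_distrib)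

definition Pi_map :: "nat \<Rightarrow> nat \<Rightarrow> real list list \<Rightarrow> (nat \<Rightarrow> real) \<Rightarrow> nat \<Rightarrow> real" where
  "Pi_map D d rs y = (\<lambda>k. if k < d then rowdotD D (rs ! k) y / sqrt d else 0)"

lemma nsq_Pi: "length rs = d \<Longrightarrow> nsq d (Pi_map D d rs y) = (\<Sum>r\<leftarrow>rs. (rowdotD D r y)^2) / d"
  unfolding nsq_def Pi_map_def sum_list_nth_sum
  by (simp add: power_divide sum_divide_distrib)

lemma Pi_vec: "k \<ge> d \<Longrightarrow> Pi_map D d rs y k = 0"
  by (simp add: Pi_map_def)

lemma Pi_lin: "Pi_map D d rs (\<lambda>l. c * (\<Sum>i\<leftarrow>js. f i l)) = (\<lambda>k. c * (\<Sum>i\<leftarrow>js. Pi_map D d rs (f i) k))"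
proof
  fix k
  show "Pi_map D d rs (\<lambda>l. c * (\<Sum>i\<leftarrow>js. f i l)) k = c * (\<Sum>i\<leftarrow>js. Pi_map D d rs (f i) k)"
  proof (cases "k < d")
    case True
    then show ?thesis unfolding Pi_map_def
      by (simp add: rowdotD_scale rowdotD_sum_list sum_list_div[symmetric])
  next
    case False
    then show ?thesis unfolding Pi_map_def by simp
  qed
qed

lemma unit_nsq: "unit_vec d u \<Longrightarrow> nsq d u = 1"
  unfolding unit_vec_def by (simp add: dinner_self)

lemma emb_sym: "is_embedding d N n A m \<tau> U V \<longleftrightarrow> is_embedding d n N (\<lambda>i j. A j i) m \<tau> V U"
  unfolding is_embedding_def by (auto simp add: dinner_comm)

lemma mrd_sym: "mrd d N n A = mrd d n N (\<lambda>i j. A j i)"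
  unfolding mrd_def using emb_sym by metis

lemma mrd_inf_sym: "mrd_inf N n A = mrd_inf n N (\<lambda>i j. A j i)"
  unfolding mrd_inf_def using mrd_sym by metis

lemma margin_le1:
  assumes "is_embedding d N n A m 0 U V" "N \<ge> 1" "n \<ge> 1"
  shows "m \<le> 1"
proof -
  have u: "nsq d (U 0) = 1" and v: "nsq d (V 0) = 1"
    using assms unfolding is_embedding_def by (auto intro: unit_nsq)
  have c1: "dinner d (U 0) (V 0) \<le> 1" using dinner_CS[of d "U 0" "V 0"] u v by simp
  have "nsq d (\<lambda>l. - U 0 l) = 1" using u by (simp add: nsq_def)
  hence "dinner d (\<lambda>l. - U 0 l) (V 0) \<le> 1" using dinner_CS[of d "\<lambda>l. - U 0 l" "V 0"] v by simp
  hence c2: "- dinner d (U 0) (V 0) \<le> 1" by (simp add: dinner_def sum_negf)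
  show ?thesis using assms(1) assms(2,3) c1 c2 unfolding is_embedding_def
    by (cases "A 0 0") force+
qed

lemma mrd_le1: "N \<ge> 1 \<Longrightarrow> n \<ge> 1 \<Longrightarrow> mrd d N n A \<le> 1"
  unfolding mrd_def by (rule Sup_least) (auto dest: margin_le1)

lemma mrd_inf_le1: "N \<ge> 1 \<Longrightarrow> n \<ge> 1 \<Longrightarrow> mrd_inf N n A \<le> 1"
  unfolding mrd_inf_def by (rule SUP_least) (rule mrd_le1)

lemma mrd_ge: "0 \<le> m \<Longrightarrow> is_embedding d N n A m 0 U V \<Longrightarrow> ereal m \<le> mrd d N n A"
  unfolding mrd_def by (rule Sup_upper) blast

lemma mrd_inf_pos:
  assumes "n \<ge> 1"
  shows "ereal (1 / sqrt n) \<le> mrd_inf N n A"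
proof -
  define s where "s = (\<lambda>j i. if A j i then (1::real) else -1)"
  define V where "V = (\<lambda>i::nat. \<lambda>l::nat. if l = i then (1::real) else 0)"
  define U where "U = (\<lambda>j l. if l < n then s j l / sqrt n else 0)"
  have s2: "(s j l)^2 = 1" for j l by (simp add: s_def)
  have dv: "dinner n (U j) (V i) = s j i / sqrt n" if "i < n" for i j
  proof -
    have "dinner n (U j) (V i) = (\<Sum>l<n. if l = i then s j i / sqrt n else 0)"
      unfolding dinner_def by (intro sum.cong) (auto simp: U_def V_def)
    also have "\<dots> = s j i / sqrt n" using that by simp
    finally show ?thesis .
  qed
  have "is_embedding n N n A (1 / sqrt n) 0 U V"
    unfolding is_embedding_def
  proof (intro conjI allI impI)
    fix j assume "j < N"
    show "unit_vec n (U j)" unfolding unit_vec_def vec_in_def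
    proof (intro conjI allI impI)
      fix k assume "n \<le> k" then show "U j k = 0" by (simp add: U_def)
    next
      have "dinner n (U j) (U j) = (\<Sum>l<n. 1 / n)"
        unfolding dinner_def by (intro sum.cong) (auto simp: U_def power2_eq_square[symmetric] power_divide s2)
      then show "dinner n (U j) (U j) = 1" using assms by simp
    qed
  next
    fix i assume "i < n"
    show "unit_vec n (V i)" unfolding unit_vec_def vec_in_def
    proof (intro conjI allI impI)
      fix k assume "n \<le> k" then show "V i k = 0" using \<open>i < n\<close> by (simp add: V_def)
    next
      have "dinner n (V i) (V i) = (\<Sum>l<n. if l = i then 1 else 0)"
        unfolding dinner_def by (intro sum.cong) (auto simp: V_def)
      then show "dinner n (V i) (V i) = 1" using \<open>i < n\<close> by simp
    qed
  next
    fix j i assume "j < N" "i < n" "A j i"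
    then show "0 + 1 / sqrt n \<le> dinner n (U j) (V i)" using dv by (simp add: s_def)
  next
    fix j i assume "j < N" "i < n" "\<not> A j i"
    then show "dinner n (U j) (V i) \<le> 0 - 1 / sqrt n" using dv by (simp add: s_def)
  qed
  hence "ereal (1 / sqrt n) \<le> mrd n N n A" by (intro mrd_ge) auto
  also have "\<dots> \<le> mrd_inf N n A" unfolding mrd_inf_def by (rule SUP_upper) simp
  finally show ?thesis .
qed

lemma get_emb:
  assumes "mrd_inf N n A = ereal m" "x < m"
  shows "\<exists>D m0 U V. x < m0 \<and> 0 \<le> m0 \<and> is_embedding D N n A m0 0 U V"
proof -
  have "ereal x < (SUP d. mrd d N n A)" using assms unfolding mrd_inf_def by simp
  then obtain D where "ereal x < mrd D N n A" by (auto simp: less_SUP_iff)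
  then obtain z where "z \<in> {ereal m | m. m \<ge> 0 \<and> (\<exists>U V. is_embedding D N n A m 0 U V)}" "ereal x < z"
    unfolding mrd_def by (auto simp: less_Sup_iff)
  then obtain m0 U V where "x < m0" "0 \<le> m0" "is_embedding D N n A m0 0 U V" by auto
  then show ?thesis by blast
qed

lemma Pi_scale: "Pi_map D d rs (\<lambda>l. c * v l) = (\<lambda>k. c * Pi_map D d rs v k)"
  by (rule ext) (simp add: Pi_map_def rowdotD_scale)

lemma sum_list_ge: "(\<And>i. i \<in> set js \<Longrightarrow> c \<le> f i) \<Longrightarrow> real (length js) * c \<le> (\<Sum>i\<leftarrow>js. f i)"
  by (induction js) (auto simp: algebra_simps intro: add_mono)

lemma card_lists_le:
  assumes "finite X" "card X \<le> c"
  shows "card {ys. set ys \<subseteq> X \<and> length ys = k} \<le> c ^ k"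
  using assms by (simp add: card_lists_length_eq power_mono)

lemma pow_bound: "(n::nat) \<ge> 2 \<Longrightarrow> (2*n)^k + n \<le> (2*n)^(Suc k)"
proof -
  assume n: "n \<ge> 2"
  have "1 \<le> (2*n)^k" using n by simp
  moreover have "n \<le> 2*n - 1" using n by simp
  ultimately have "1 * n \<le> (2*n)^k * (2*n - 1)" by (rule mult_le_mono)
  hence "n \<le> (2*n)^k * (2*n - 1)" by simp
  hence "(2*n)^k + n \<le> (2*n)^k + (2*n)^k * (2*n - 1)" by simp
  also have "\<dots> = (2*n)^k * (2*n)" using n by (simp add: algebra_simps)
  finally show ?thesis by (simp add: mult.commute)
qed

lemma core:
  fixes \<epsilon> m :: real
  assumes N: "N \<ge> 1" and n: "n \<ge> 2" and \<epsilon>: "0 < \<epsilon>" "\<epsilon> \<le> 1/2"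
    and m: "mrd_inf N n A = ereal m" "0 < m" "m \<le> 1"
    and d: "600000 / \<epsilon>^4 * (1/m^2) * ln n \<le> real d"
  shows "ereal ((1-\<epsilon>)*m) \<le> mrd d N n A"
proof -
  define \<delta> where "\<delta> = \<epsilon>/8"
  have \<delta>: "0 < \<delta>" "\<delta> \<le> 1/16" using \<epsilon> by (auto simp: \<delta>_def)
  have "(1-\<delta>)*m < m" using \<delta> m by simp
  then obtain D m0 U V where m0: "(1-\<delta>)*m < m0" "0 \<le> m0" and emb: "is_embedding D N n A m0 0 U V"
    using get_emb[OF m(1)] by blast
  have "0 < (1-\<delta>)*m" using \<delta> m by simp
  hence m0pos: "m0 > 0" using m0 by linarith
  define s where "s = (\<lambda>j i. if A j i then (1::real) else -1)"
  have s2: "s j i * s j i = 1" "(s j i)^2 = 1" for j i by (auto simp: s_def)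
  have Uu: "nsq D (U j) = 1" if "j < N" for j using emb that unfolding is_embedding_def by (auto intro: unit_nsq)
  have Vu: "nsq D (V i) = 1" if "i < n" for i using emb that unfolding is_embedding_def by (auto intro: unit_nsq)
  have marg: "s j i * dinner D (U j) (V i) \<ge> m0" if "j < N" "i < n" for j i
    using emb that unfolding is_embedding_def s_def by (cases "A j i") force+
  define k :: nat where "k = nat \<lceil>128/(\<epsilon>^2*m^2)\<rceil>"
  have em: "0 < \<epsilon>^2*m^2" "\<epsilon>^2*m^2 \<le> 1/4"
  proof -
    show "0 < \<epsilon>^2*m^2" using \<epsilon> m by simp
    have "\<epsilon>^2 \<le> (1/2)^2" using \<epsilon> by (intro power_mono) auto
    moreover have "m^2 \<le> 1" using m by (simp add: power_le_one)
    ultimately have "\<epsilon>^2*m^2 \<le> (1/2)^2 * 1" by (intro mult_mono) auto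
    then show "\<epsilon>^2*m^2 \<le> 1/4" by (simp add: power2_eq_square)
  qed
  have k1: "128/(\<epsilon>^2*m^2) \<le> real k" unfolding k_def by linarith
  have k2: "real k \<le> 128/(\<epsilon>^2*m^2) + 1"
  proof -
    have "0 \<le> 128/(\<epsilon>^2*m^2)" using em by simp
    hence "real k = of_int \<lceil>128/(\<epsilon>^2*m^2)\<rceil>" unfolding k_def by simp
    then show ?thesis by linarith
  qed
  have kpos: "real k > 0" using k1 em by (smt (verit) divide_pos_pos)
  define Vh where "Vh = (\<lambda>i. V i) ` {..<n} \<union> (\<lambda>i. \<lambda>l. - V i l) ` {..<n}"
  define Ls where "Ls = {ys. set ys \<subseteq> Vh \<and> length ys = k}"
  define avg where "avg = (\<lambda>ys. \<lambda>l::nat. (1 / real k) * (\<Sum>y\<leftarrow>ys. y l))"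
  define JS where "JS = avg ` Ls \<union> V ` {..<n}"
  have fVh: "finite Vh" "card Vh \<le> 2*n"
  proof -
    show "finite Vh" unfolding Vh_def by simp
    have "card Vh \<le> card ((\<lambda>i. V i) ` {..<n}) + card ((\<lambda>i. \<lambda>l. - V i l) ` {..<n})"
      unfolding Vh_def by (rule card_Un_le)
    also have "\<dots> \<le> n + n"
      using card_image_le[of "{..<n}" "\<lambda>i. V i"] card_image_le[of "{..<n}" "\<lambda>i. \<lambda>l. - V i l"] by simp
    finally show "card Vh \<le> 2*n" by simp
  qed
  have fJS: "finite JS" unfolding JS_def Ls_def using fVh(1) finite_lists_length_eq[OF fVh(1), of k] by blast
  have cJS: "card JS \<le> (2*n)^k + n"
  proof -
    have c0: "card JS \<le> card (avg ` Ls) + card (V ` {..<n})" unfolding JS_def by (rule card_Un_le)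
    have c1: "card (avg ` Ls) \<le> card Ls" by (rule card_image_le) (simp add: Ls_def fVh finite_lists_length_eq)
    have c2: "card (V ` {..<n}) \<le> n" using card_image_le[of "{..<n}" V] by simp
    have c3: "card Ls \<le> (2*n)^k" unfolding Ls_def by (rule card_lists_le) (use fVh in auto)
    show ?thesis using c0 c1 c2 c3 by linarith
  qed
  define P where "P = real ((2*n)^k + n)"
  have P2: "2 \<le> P"
  proof -
    have "real n \<le> P" unfolding P_def by simp
    moreover have "2 \<le> real n" using n by simp
    ultimately show ?thesis by linarith
  qed
  have lnP: "ln P \<le> 2 * (real k + 1) * ln n"
  proof -
    have "P \<le> real ((2*n)^(Suc k))" unfolding P_def using pow_bound[OF n] by (simp only: of_nat_le_iff)
    hence "ln P \<le> ln (real ((2*n)^(Suc k)))" using P2 by (intro ln_mono) auto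
    also have "\<dots> = ln ((2*real n)^(Suc k))" by simp
    also have "\<dots> = real (Suc k) * ln (2*real n)" by (rule ln_realpow)
    also have "ln (2*real n) \<le> ln (real n^2)"
    proof -
      have "2 * real n \<le> real n * real n" using n by (intro mult_right_mono) auto
      then show ?thesis using n by (simp add: power2_eq_square)
    qed
    hence "real (Suc k) * ln (2*real n) \<le> real (Suc k) * ln (real n^2)" by (intro mult_left_mono) auto
    also have "ln (real n^2) = 2 * ln n" by (subst ln_realpow) (use n in auto)
    finally show ?thesis by (simp add: algebra_simps)
  qed
  have dJL: "33 * ln P / \<delta>^2 \<le> real d"
  proof -
    have lnn: "0 \<le> ln (real n)" using n by simp
    have kk: "real k + 1 \<le> 130 / (\<epsilon>^2*m^2)"
    proof -
      have "2 \<le> 2 / (\<epsilon>^2*m^2)" using em by (simp add: field_simps)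
      then show ?thesis using k2 by (simp add: field_simps)
    qed
    have "33 * ln P / \<delta>^2 = (64*33/\<epsilon>^2) * ln P" by (simp add: \<delta>_def power2_eq_square field_simps)
    also have "\<dots> \<le> (64*33/\<epsilon>^2) * (2 * (real k + 1) * ln n)" using lnP \<epsilon> by (intro mult_left_mono) auto
    also have "\<dots> \<le> (64*33/\<epsilon>^2) * (2 * (130 / (\<epsilon>^2*m^2)) * ln n)"
      using kk lnn \<epsilon> by (intro mult_left_mono mult_right_mono) auto
    also have "\<dots> = 549120 / \<epsilon>^4 * (1/m^2) * ln n" using \<epsilon> m by (simp add: power2_eq_square field_simps eval_nat_numeral)
    also have "\<dots> \<le> 600000 / \<epsilon>^4 * (1/m^2) * ln n"
      using lnn \<epsilon> m by (intro mult_right_mono divide_right_mono) auto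
    finally show ?thesis using d by linarith
  qed
  obtain rs where rs: "length rs = d" and rsJL: "\<forall>y\<in>JS. (1-\<delta>) * nsq D y \<le> (\<Sum>r\<leftarrow>rs. (rowdotD D r y)^2) / d
                                  \<and> (\<Sum>r\<leftarrow>rs. (rowdotD D r y)^2) / d \<le> (1+\<delta>) * nsq D y"
  proof -
    have cJSr: "real (card JS) \<le> P" unfolding P_def using cJS by (simp only: of_nat_le_iff)
    have "\<delta> \<le> 1/2" using \<delta> by simp
    from JL[OF fJS cJSr P2 \<delta>(1) this dJL, of D] show ?thesis using that by blast
  qed
  define Pm where "Pm = Pi_map D d rs"
  have PiJS: "(1-\<delta>) * nsq D y \<le> nsq d (Pm y) \<and> nsq d (Pm y) \<le> (1+\<delta>) * nsq D y" if "y \<in> JS" for y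
    using rsJL that nsq_Pi[OF rs] unfolding Pm_def by simp
  define nv where "nv = (\<lambda>i. sqrt (nsq d (Pm (V i))))"
  have nv: "sqrt (1-\<delta>) \<le> nv i" "nv i \<le> sqrt (1+\<delta>)" "0 < nv i" if "i < n" for i
  proof -
    have "V i \<in> JS" using that unfolding JS_def by simp
    from PiJS[OF this] Vu[OF that] have "(1-\<delta>) \<le> nsq d (Pm (V i))" "nsq d (Pm (V i)) \<le> 1+\<delta>" by auto
    then show "sqrt (1-\<delta>) \<le> nv i" "nv i \<le> sqrt (1+\<delta>)" unfolding nv_def by auto
    moreover have "0 < sqrt (1-\<delta>)" using \<delta> by simp
    ultimately show "0 < nv i" by linarith
  qed
  have nvsq: "(nv i)^2 = nsq d (Pm (V i))" for i unfolding nv_def by (simp add: nsq_nonneg)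
  define V' where "V' = (\<lambda>i l. Pm (V i) l / nv i)"
  have Pm0: "Pm y l = 0" if "l \<ge> d" for y l unfolding Pm_def using that by (rule Pi_vec)
  have V'u: "unit_vec d (V' i)" "nsq d (V' i) = 1" if "i < n" for i
  proof -
    have "nsq d (V' i) = (1 / nv i)^2 * nsq d (Pm (V i))"
      unfolding V'_def using nsq_scale[of d "1 / nv i" "Pm (V i)"] by (simp add: field_simps)
    also have "\<dots> = 1" using nv(3)[OF that] by (simp flip: nvsq add: power_divide)
    finally show "nsq d (V' i) = 1" .
    then show "unit_vec d (V' i)" unfolding unit_vec_def vec_in_def using Pm0 by (simp add: V'_def dinner_self)
  qed
  define \<eta> where "\<eta> = (\<epsilon>*m^2/16)^2"
  have \<eta>: "0 < \<eta>" "\<eta> \<le> 1" "sqrt \<eta> = \<epsilon>*m^2/16"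
  proof -
    have e1: "0 < \<epsilon>*m^2/16" using \<epsilon> m by simp
    have "m^2 \<le> 1" using m by (simp add: power_le_one)
    hence "\<epsilon>*m^2 \<le> 1" using \<epsilon> by (intro mult_le_one) auto
    hence e2: "\<epsilon>*m^2/16 \<le> 1" by simp
    show "0 < \<eta>" using e1 unfolding \<eta>_def by (intro zero_less_power) 
    show "\<eta> \<le> 1" using e1 e2 unfolding \<eta>_def by (simp add: power_le_one)
    show "sqrt \<eta> = \<epsilon>*m^2/16" using e1 unfolding \<eta>_def by simp
  qed
  define m' where "m' = (1-\<epsilon>)*m"
  have row: "\<exists>u. unit_vec d u \<and> (\<forall>i<n. s j i * dinner d u (V' i) \<ge> m')" if j: "j < N" for j
  proof -
    define a where "a = (\<lambda>i l. s j i * V' i l)"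
    have anorm: "nsq d (a i) = 1" if "i < n" for i
      unfolding a_def using nsq_scale[of d "s j i" "V' i"] V'u(2)[OF that] s2 by simp
    obtain lam where lam: "simpl n lam"
      and lamm: "\<forall>i<n. dinner d (comb n lam a) (a i) \<ge> nsq d (comb n lam a) - 4 * sqrt \<eta>"
      using minnorm[of n d a \<eta>] n anorm \<eta> by auto
    define w where "w = comb n lam a"
    have wlow: "sqrt (nsq d w) \<ge> (1 - 4*\<delta>) * m"
    proof -
      define p where "p = (\<lambda>i l. s j i * Pm (V i) l)"
      define \<sigma> where "\<sigma> = (\<Sum>i<n. lam i / nv i)"
      have lam0: "\<forall>i<n. lam i \<ge> 0" "(\<Sum>i<n. lam i) = 1" using lam unfolding simpl_def by auto
      define R where "R = sqrt (1+\<delta>)"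
      define Q where "Q = sqrt (1-\<delta>)"
      have R1: "1 \<le> R" using \<delta> unfolding R_def by simp
      have \<sigma>low: "\<sigma> \<ge> 1/R"
      proof -
        have "(\<Sum>i<n. lam i * (1/R)) \<le> (\<Sum>i<n. lam i / nv i)"
        proof (intro sum_mono)
          fix i assume "i \<in> {..<n}"
          then have i: "i < n" by simp
          have "0 < sqrt (1+\<delta>)" using \<delta> by simp
          then have "1/R \<le> 1 / nv i" using nv[OF i] unfolding R_def by (intro divide_left_mono mult_pos_pos) auto
          then show "lam i * (1/R) \<le> lam i / nv i" using lam0(1) i by (metis mult_left_mono times_divide_eq_right mult_1_right)
        qed
        also have "(\<Sum>i<n. lam i * (1/R)) = (\<Sum>i<n. lam i) * (1/R)" by (rule sum_distrib_right[symmetric])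
        also have "\<dots> = 1/R" using lam0(2) by simp
        finally show ?thesis unfolding \<sigma>_def by simp
      qed
      have \<sigma>pos: "\<sigma> > 0" using \<sigma>low R1 by (smt (verit) divide_pos_pos)
      define \<nu> where "\<nu> = (\<lambda>i. lam i / (nv i * \<sigma>))"
      have \<nu>0: "\<forall>i<n. \<nu> i \<ge> 0" using lam0(1) nv(3) \<sigma>pos unfolding \<nu>_def by (simp add: less_imp_le)
      have \<nu>1: "(\<Sum>i<n. \<nu> i) = 1"
      proof -
        have "(\<Sum>i<n. \<nu> i) = (\<Sum>i<n. lam i / nv i) / \<sigma>"
          unfolding \<nu>_def sum_divide_distrib by (intro sum.cong) (auto simp: field_simps)
        then show ?thesis using \<sigma>pos unfolding \<sigma>_def by simp
      qed
      define xh where "xh = (\<lambda>l. \<Sum>i<n. \<nu> i * p i l)"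
      have w\<sigma>: "w = (\<lambda>l. \<sigma> * xh l)"
      proof
        fix l
        have "\<sigma> * xh l = (\<Sum>i<n. \<sigma> * (\<nu> i * p i l))" unfolding xh_def by (simp add: sum_distrib_left)
        also have "\<dots> = (\<Sum>i<n. lam i * a i l)"
        proof (intro sum.cong refl)
          fix i assume "i \<in> {..<n}"
          then have "nv i > 0" using nv(3) by simp
          then show "\<sigma> * (\<nu> i * p i l) = lam i * a i l"
            using \<sigma>pos unfolding \<nu>_def p_def a_def V'_def by (simp add: field_simps)
        qed
        finally show "w l = \<sigma> * xh l" unfolding w_def comb_def by simp
      qed
      obtain js where js: "length js = k" "set js \<subseteq> {..<n}"
        and jsb: "nsq d (\<lambda>l. real k * xh l - (\<Sum>i\<leftarrow>js. p i l)) \<le> k * (\<Sum>i<n. \<nu> i * nsq d (p i))"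
        using maurey[OF \<nu>0 \<nu>1, of k d p] unfolding xh_def by blast
      have pn: "(\<Sum>i<n. \<nu> i * nsq d (p i)) \<le> 1+\<delta>"
      proof -
        have "(\<Sum>i<n. \<nu> i * nsq d (p i)) \<le> (\<Sum>i<n. \<nu> i * (1+\<delta>))"
        proof (intro sum_mono mult_left_mono)
          fix i assume "i \<in> {..<n}"
          then have i: "i < n" by simp
          have "nsq d (p i) = nsq d (Pm (V i))" unfolding p_def using nsq_scale[of d "s j i" "Pm (V i)"] s2 by simp
          also have "\<dots> = (nv i)^2" by (simp add: nvsq)
          also have "\<dots> \<le> (sqrt (1+\<delta>))^2" using nv[OF i] by (intro power_mono) auto
          finally show "nsq d (p i) \<le> 1+\<delta>" using \<delta> by simp
          show "0 \<le> \<nu> i" using \<nu>0 i by simp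
        qed
        also have "\<dots> = (\<Sum>i<n. \<nu> i) * (1+\<delta>)" by (rule sum_distrib_right[symmetric])
        also have "\<dots> = 1+\<delta>" using \<nu>1 by simp
        finally show ?thesis .
      qed
      define g where "g = (\<lambda>i. if A j i then V i else (\<lambda>l. - V i l))"
      have gs: "g i l = s j i * V i l" for i l by (simp add: g_def s_def)
      define ys where "ys = map g js"
      have ysL: "ys \<in> Ls" unfolding Ls_def ys_def Vh_def g_def using js by auto
      define q where "q = avg ys"
      have qJS: "q \<in> JS" unfolding JS_def q_def using ysL by simp
      have qf: "q = (\<lambda>l. (1/real k) * (\<Sum>i\<leftarrow>js. s j i * V i l))"
        unfolding q_def avg_def ys_def by (simp add: comp_def gs)
      have Pq: "Pm q = (\<lambda>l. (1/real k) * (\<Sum>i\<leftarrow>js. p i l))"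
        unfolding qf Pm_def Pi_lin Pi_scale p_def ..
      have qn: "sqrt (nsq D q) \<ge> m0"
      proof -
        have "dinner D (U j) q = (1/real k) * (\<Sum>i\<leftarrow>js. s j i * dinner D (U j) (V i))"
          unfolding qf dinner_scale_right dinner_sum_list by simp
        also have "\<dots> \<ge> (1/real k) * (real (length js) * m0)"
          using marg[OF j] js(2) kpos by (intro mult_left_mono sum_list_ge) auto
        also have "(1/real k) * (real (length js) * m0) = m0" using js(1) kpos by simp
        finally have "m0 \<le> dinner D (U j) q" .
        also have "\<dots> \<le> sqrt (nsq D (U j)) * sqrt (nsq D q)" by (rule dinner_CS)
        finally show ?thesis using Uu[OF j] by simp
      qed
      have Pqn: "sqrt (nsq d (Pm q)) \<ge> Q * m0"
      proof -
        have "(1-\<delta>) * nsq D q \<le> nsq d (Pm q)" using PiJS[OF qJS] by simp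
        hence "sqrt ((1-\<delta>) * nsq D q) \<le> sqrt (nsq d (Pm q))" by (rule real_sqrt_le_mono)
        moreover have "sqrt ((1-\<delta>) * nsq D q) = Q * sqrt (nsq D q)" unfolding Q_def by (simp add: real_sqrt_mult)
        moreover have "Q * m0 \<le> Q * sqrt (nsq D q)" using qn \<delta> unfolding Q_def by (intro mult_left_mono) auto
        ultimately show ?thesis by linarith
      qed
      have diff: "sqrt (nsq d (\<lambda>l. xh l - Pm q l)) \<le> \<delta> * m"
      proof -
        have "(\<lambda>l. real k * xh l - (\<Sum>i\<leftarrow>js. p i l)) = (\<lambda>l. real k * (xh l - Pm q l))"
          unfolding Pq using kpos by (simp add: algebra_simps)
        hence "(real k)^2 * nsq d (\<lambda>l. xh l - Pm q l) = nsq d (\<lambda>l. real k * xh l - (\<Sum>i\<leftarrow>js. p i l))"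
          using nsq_scale[of d "real k" "\<lambda>l. xh l - Pm q l"] by simp
        also have "\<dots> \<le> k * (\<Sum>i<n. \<nu> i * nsq d (p i))" by (rule jsb)
        also have "\<dots> \<le> k * (1+\<delta>)" using pn by (intro mult_left_mono) auto
        finally have "(real k)^2 * nsq d (\<lambda>l. xh l - Pm q l) \<le> k * (1+\<delta>)" .
        hence "real k * (real k * nsq d (\<lambda>l. xh l - Pm q l)) \<le> real k * (1+\<delta>)" by (simp add: power2_eq_square mult.assoc)
        hence "real k * nsq d (\<lambda>l. xh l - Pm q l) \<le> 1+\<delta>" using kpos mult_le_cancel_left_pos by blast
        hence "nsq d (\<lambda>l. xh l - Pm q l) \<le> (1+\<delta>) / real k" using kpos by (simp add: pos_le_divide_eq mult.commute)
        also have "\<dots> \<le> 2 / real k" using \<delta> kpos by (intro divide_right_mono) auto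
        also have "\<dots> \<le> 2 / (128/(\<epsilon>^2*m^2))" using k1 em kpos by (intro divide_left_mono mult_pos_pos) auto
        also have "\<dots> = (\<delta>*m)^2" unfolding \<delta>_def using em by (simp add: power2_eq_square field_simps)
        finally show ?thesis using \<delta> m by (simp add: real_le_lsqrt real_sqrt_le_iff)
      qed
      have X: "sqrt (nsq d xh) \<ge> Q * m0 - \<delta> * m"
        using nrm_lower[of d "Pm q" xh] Pqn diff by linarith
      have wX: "sqrt (nsq d w) = \<sigma> * sqrt (nsq d xh)"
        unfolding w\<sigma> nsq_scale using \<sigma>pos by (simp add: real_sqrt_mult)
      have QR: "(1-\<delta>) * R \<le> Q"
      proof -
        have "(1-\<delta>) * R = sqrt ((1-\<delta>)^2 * (1+\<delta>))" unfolding R_def using \<delta> by (simp add: real_sqrt_mult)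
        also have "\<dots> \<le> Q"
        proof -
          have "(1-\<delta>)^2 * (1+\<delta>) = (1-\<delta>) * (1 - \<delta>^2)" by (simp add: power2_eq_square algebra_simps)
          also have "\<dots> \<le> (1-\<delta>) * 1" using \<delta> by (intro mult_left_mono) auto
          finally show ?thesis unfolding Q_def by (intro real_sqrt_le_mono) simp
        qed
        finally show ?thesis .
      qed
      have Qm0: "Q * m0 \<ge> Q * ((1-\<delta>)*m)" using m0 \<delta> unfolding Q_def by (intro mult_left_mono) auto
      have B: "Q * ((1-\<delta>)*m) \<ge> (1-\<delta>)*(1-\<delta>)*m"
      proof -
        have "(1-\<delta>) * 1 \<le> (1-\<delta>) * R" using R1 \<delta> by (intro mult_left_mono) auto
        hence "(1-\<delta>) \<le> Q" using QR by simp
        moreover have "0 \<le> (1-\<delta>)*m" using \<delta> m by simp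
        ultimately have "(1-\<delta>) * ((1-\<delta>)*m) \<le> Q * ((1-\<delta>)*m)" by (rule mult_right_mono)
        then show ?thesis by (simp add: mult.assoc)
      qed
      have Xpos: "sqrt (nsq d xh) \<ge> 0" by (simp add: nsq_nonneg)
      have "sqrt (nsq d w) \<ge> (1/R) * sqrt (nsq d xh)" unfolding wX using \<sigma>low Xpos by (intro mult_right_mono) auto
      moreover have "(1/R) * sqrt (nsq d xh) \<ge> (1/R) * (Q * ((1-\<delta>)*m) - \<delta> * m)"
        using X Qm0 R1 by (intro mult_left_mono) auto
      moreover have "(1/R) * (Q * ((1-\<delta>)*m) - \<delta> * m) = (Q/R) * ((1-\<delta>)*m) - \<delta>*m/R" using R1 by (simp add: field_simps)
      moreover have "(Q/R) * ((1-\<delta>)*m) \<ge> (1-\<delta>) * ((1-\<delta>)*m)"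
      proof -
        have "1-\<delta> \<le> Q/R" using QR R1 by (simp add: field_simps)
        then show ?thesis using \<delta> m by (intro mult_right_mono) auto
      qed
      moreover have "\<delta>*m/R \<le> \<delta>*m/1" using R1 \<delta> m by (intro divide_left_mono) auto
      moreover have "(1-\<delta>) * ((1-\<delta>)*m) - \<delta>*m \<ge> (1 - 4*\<delta>) * m"
      proof -
        have "(1-\<delta>) * ((1-\<delta>)*m) - \<delta>*m - (1 - 4*\<delta>) * m = (\<delta>^2 + \<delta>) * m" by (simp add: power2_eq_square algebra_simps)
        also have "\<dots> \<ge> 0" using \<delta> m by simp
        finally show ?thesis by simp
      qed
      ultimately show ?thesis by linarith
    qed
    have "(4*\<delta>) * m \<le> (1/4) * m" using \<delta> m by (intro mult_right_mono) auto
    moreover have "(1 - 4*\<delta>) * m = m - (4*\<delta>) * m" by (simp add: algebra_simps)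
    ultimately have "(1 - 4*\<delta>) * m \<ge> m/2" using m by linarith
    hence wpos: "sqrt (nsq d w) \<ge> m/2" using wlow by linarith
    define u where "u = (\<lambda>l. w l / sqrt (nsq d w))"
    have w0: "w l = 0" if "l \<ge> d" for l
      unfolding w_def comb_def a_def V'_def using Pm0[OF that] by simp
    have wnz: "sqrt (nsq d w) > 0" using wpos m by linarith
    have uu: "unit_vec d u"
    proof -
      have "nsq d u = (1 / sqrt (nsq d w))^2 * nsq d w"
        unfolding u_def using nsq_scale[of d "1 / sqrt (nsq d w)" w] by (simp add: field_simps)
      also have "\<dots> = 1" using wnz by (simp add: field_simps nsq_nonneg)
      finally show ?thesis unfolding unit_vec_def vec_in_def using w0 by (simp add: u_def dinner_self)
    qed
    have "\<forall>i<n. s j i * dinner d u (V' i) \<ge> m'"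
    proof (intro allI impI)
      fix i assume i: "i < n"
      have "s j i * dinner d u (V' i) = dinner d u (a i)"
        unfolding a_def dinner_scale_right by simp
      also have "\<dots> = dinner d w (a i) / sqrt (nsq d w)"
        unfolding u_def using dinner_scale_left[of d "1 / sqrt (nsq d w)" w "a i"] by (simp add: field_simps)
      also have "\<dots> \<ge> (nsq d w - \<epsilon>*m^2/4) / sqrt (nsq d w)"
        using lamm i wnz \<eta>(3) unfolding w_def by (intro divide_right_mono) auto
      finally have 1: "s j i * dinner d u (V' i) \<ge> (nsq d w - \<epsilon>*m^2/4) / sqrt (nsq d w)" .
      have e1: "(nsq d w - \<epsilon>*m^2/4) / sqrt (nsq d w) = sqrt (nsq d w) - (\<epsilon>*m^2/4) / sqrt (nsq d w)"
        using wnz by (simp add: field_simps nsq_nonneg)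
      have e2: "(\<epsilon>*m^2/4) / sqrt (nsq d w) \<le> (\<epsilon>*m^2/4) / (m/2)"
        using wpos wnz m \<epsilon> by (intro divide_left_mono) auto
      have e3: "(\<epsilon>*m^2/4) / (m/2) = \<epsilon>*m/2" using m by (simp add: power2_eq_square field_simps)
      have "(nsq d w - \<epsilon>*m^2/4) / sqrt (nsq d w) \<ge> sqrt (nsq d w) - \<epsilon>*m/2" using e1 e2 e3 by linarith
      moreover have "sqrt (nsq d w) - \<epsilon>*m/2 \<ge> m'" using wlow unfolding m'_def \<delta>_def by (simp add: algebra_simps)
      ultimately show "s j i * dinner d u (V' i) \<ge> m'" using 1 by linarith
    qed
    then show ?thesis using uu by blast
  qed
  then obtain U' where U': "\<forall>j<N. unit_vec d (U' j) \<and> (\<forall>i<n. s j i * dinner d (U' j) (V' i) \<ge> m')"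
    by metis
  have "is_embedding d N n A m' 0 U' V'"
    unfolding is_embedding_def
  proof (intro conjI allI impI)
    fix j assume "j < N" then show "unit_vec d (U' j)" using U' by blast
  next
    fix i assume "i < n" then show "unit_vec d (V' i)" using V'u by blast
  next
    fix j i assume "j < N" "i < n" "A j i"
    then show "0 + m' \<le> dinner d (U' j) (V' i)" using U' by (force simp: s_def)
  next
    fix j i assume "j < N" "i < n" "\<not> A j i"
    then show "dinner d (U' j) (V' i) \<le> 0 - m'" using U' by (force simp: s_def)
  qed
  moreover have "0 \<le> m'" unfolding m'_def using \<epsilon> m by simp
  ultimately show ?thesis unfolding m'_def by (intro mrd_ge)
qed

lemma one_col:
  assumes "n = 1" "d \<ge> 1"
  shows "ereal 1 \<le> mrd d N n A"
proof -
  define V where "V = (\<lambda>i::nat. \<lambda>l::nat. if l = 0 then (1::real) else 0)"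
  define U where "U = (\<lambda>j::nat. \<lambda>l::nat. if l = 0 then (if A j 0 then (1::real) else -1) else 0)"
  have sum0: "(\<Sum>l<d. f l) = f 0" if "\<forall>l. l \<noteq> 0 \<longrightarrow> f l = 0" for f :: "nat \<Rightarrow> real"
  proof -
    have "(\<Sum>l<d. f l) = (\<Sum>l<d. if l = 0 then f 0 else 0)" by (intro sum.cong) (use that in auto)
    also have "\<dots> = f 0" using assms by simp
    finally show ?thesis .
  qed
  have dUV: "dinner d (U j) (V 0) = (if A j 0 then 1 else -1)" for j
    unfolding dinner_def by (subst sum0) (auto simp: U_def V_def)
  have "is_embedding d N n A 1 0 U V"
    unfolding is_embedding_def
  proof (intro conjI allI impI)
    fix j assume "j < N"
    show "unit_vec d (U j)" unfolding unit_vec_def vec_in_def dinner_def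
      using assms by (subst sum0) (auto simp: U_def)
  next
    fix i assume "i < n"
    show "unit_vec d (V i)" unfolding unit_vec_def vec_in_def dinner_def
      using assms by (subst sum0) (auto simp: V_def)
  next
    fix j i assume "j < N" "i < n" "A j i"
    then show "0 + 1 \<le> dinner d (U j) (V i)" using assms dUV by simp
  next
    fix j i assume "j < N" "i < n" "\<not> A j i"
    then show "dinner d (U j) (V i) \<le> 0 - 1" using assms dUV by simp
  qed
  then show ?thesis by (intro mrd_ge) auto
qed

definition Cfun :: "real \<Rightarrow> real" where
  "Cfun \<epsilon> = 600000 / (min \<epsilon> (1/2))^4"

lemma Cfun_bigo: "Cfun \<in> O[at_right 0](\<lambda>\<epsilon>. 1 / \<epsilon> ^ 4)"
proof (rule bigoI[where c = 600000])
  have "eventually (\<lambda>x. x \<in> {0<..<(1/2::real)}) (at_right 0)" by (rule eventually_at_right_real) simp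
  then show "eventually (\<lambda>x. norm (Cfun x) \<le> 600000 * norm (1 / x ^ 4)) (at_right 0)"
  proof (rule eventually_mono)
    fix x :: real assume "x \<in> {0<..<1/2}"
    then have "min x (1/2) = x" "x > 0" by auto
    then show "norm (Cfun x) \<le> 600000 * norm (1 / x ^ 4)" unfolding Cfun_def by simp
  qed
qed

theorem theorem1p4:
  "\<exists>C :: real \<Rightarrow> real.
     C \<in> O[at_right 0](\<lambda>\<epsilon>. 1 / \<epsilon> ^ 4) \<and>
     (\<forall>\<epsilon>>0. \<forall>(N::nat) (n::nat) (A :: nat \<Rightarrow> nat \<Rightarrow> bool). N \<ge> 1 \<longrightarrow> n \<ge> 1 \<longrightarrow>
        (let m_inf = real_of_ereal (mrd_inf N n A);
             d = nat (max 1 \<lceil>C \<epsilon> * m_inf powr (-2) * ln (real (min n N))\<rceil>)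
         in mrd d N n A \<ge> ereal ((1 - \<epsilon>) * m_inf)))"
proof (intro exI conjI allI impI)
  show "Cfun \<in> O[at_right 0](\<lambda>\<epsilon>. 1 / \<epsilon> ^ 4)" by (rule Cfun_bigo)
next
  fix \<epsilon> :: real and N n :: nat and A :: "nat \<Rightarrow> nat \<Rightarrow> bool"
  assume \<epsilon>: "\<epsilon> > 0" and N: "N \<ge> 1" and n: "n \<ge> 1"
  define m where "m = real_of_ereal (mrd_inf N n A)"
  define d where "d = nat (max 1 \<lceil>Cfun \<epsilon> * m powr (-2) * ln (real (min n N))\<rceil>)"
  have mi: "mrd_inf N n A = ereal m" "0 < m" "m \<le> 1"
  proof -
    have u: "mrd_inf N n A \<le> 1" by (rule mrd_inf_le1) (use N n in auto)
    have l: "ereal (1 / sqrt n) \<le> mrd_inf N n A" using n by (rule mrd_inf_pos)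
    have p: "0 < 1 / sqrt (real n)" using n by simp
    obtain r where r: "mrd_inf N n A = ereal r" using u l by (cases "mrd_inf N n A") auto
    show "mrd_inf N n A = ereal m" unfolding m_def r by simp
    have "1 / sqrt (real n) \<le> r" using l r by simp
    then have "0 < r" using p by linarith
    then show "0 < m" using r unfolding m_def by simp
    show "m \<le> 1" using u r unfolding m_def by simp
  qed
  define \<epsilon>' where "\<epsilon>' = min \<epsilon> (1/2)"
  have \<epsilon>': "0 < \<epsilon>'" "\<epsilon>' \<le> 1/2" "\<epsilon>' \<le> \<epsilon>" using \<epsilon> by (auto simp: \<epsilon>'_def)
  have C: "Cfun \<epsilon> = 600000 / \<epsilon>'^4" unfolding Cfun_def \<epsilon>'_def ..
  have mp: "m powr (-2) = 1 / m^2" using mi by (simp add: powr_minus powr_realpow divide_inverse)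
  have d1: "d \<ge> 1" unfolding d_def by simp
  have dge: "real d \<ge> 600000 / \<epsilon>'^4 * (1/m^2) * ln (real (min n N))"
  proof -
    have "real d = real (nat (max 1 \<lceil>Cfun \<epsilon> * m powr (-2) * ln (real (min n N))\<rceil>))" unfolding d_def ..
    also have "\<dots> = of_int (max 1 \<lceil>Cfun \<epsilon> * m powr (-2) * ln (real (min n N))\<rceil>)" by simp
    also have "\<dots> \<ge> Cfun \<epsilon> * m powr (-2) * ln (real (min n N))" by linarith
    finally show ?thesis unfolding C mp .
  qed
  have goal: "ereal ((1 - \<epsilon>) * m) \<le> mrd d N n A"
  proof (cases "min n N = 1")
    case True
    have "ereal 1 \<le> mrd d N n A"
    proof (cases "n = 1")
      case True then show ?thesis using one_col d1 by blast
    next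
      case False
      then have "N = 1" using \<open>min n N = 1\<close> by (simp add: min_def split: if_splits)
      then have "ereal 1 \<le> mrd d n N (\<lambda>i j. A j i)" using one_col d1 by blast
      then show ?thesis by (simp add: mrd_sym[of d N n A])
    qed
    moreover have "(1 - \<epsilon>) * m \<le> 1" using \<epsilon> mi by (smt (verit) mult_le_one mult_nonneg_nonneg)
    ultimately show ?thesis by (meson ereal_less_eq(3) order_trans)
  next
    case False
    then have mn2: "min n N \<ge> 2" using N n by (simp add: min_def split: if_splits)
    have "ereal ((1 - \<epsilon>') * m) \<le> mrd d N n A"
    proof (cases "n \<le> N")
      case True
      then have "min n N = n" by simp
      then show ?thesis using core[OF N _ \<epsilon>'(1,2) mi dge[unfolded \<open>min n N = n\<close>]] mn2 by simp
    next
      case False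
      then have mnN: "min n N = N" by simp
      have mi': "mrd_inf n N (\<lambda>i j. A j i) = ereal m" using mi(1) mrd_inf_sym by metis
      have "ereal ((1 - \<epsilon>') * m) \<le> mrd d n N (\<lambda>i j. A j i)"
        using core[OF n _ \<epsilon>'(1,2) mi' mi(2,3) dge[unfolded mnN]] mn2 mnN by simp
      then show ?thesis by (simp add: mrd_sym[of d N n A])
    qed
    moreover have "(1 - \<epsilon>) * m \<le> (1 - \<epsilon>') * m" using \<epsilon>' mi by (intro mult_right_mono) auto
    ultimately show ?thesis by (meson ereal_less_eq(3) order_trans)
  qed
  show "let m_inf = real_of_ereal (mrd_inf N n A);
             d = nat (max 1 \<lceil>Cfun \<epsilon> * m_inf powr (-2) * ln (real (min n N))\<rceil>)
         in mrd d N n A \<ge> ereal ((1 - \<epsilon>) * m_inf)"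
    using goal unfolding Let_def m_def d_def .
qed

end
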